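(* Let $\Pi=(\Sigma_{\mathrm{in}},\Sigma_{\mathrm{out}},C,r)$ be any LCL problem with checkability radius $r$. Then there exists a node-edge checkable problem $\Pi'$ with input alphabet $\Sigma_{\mathrm{in}}$ that is equivalent to $\Pi$ on trees: on any tree with any input labeling, given a solution for $\Pi'$ one can compute a solution for $\Pi$ in $O(r)$ rounds, and given a solution for $\Pi$ one can compute a solution for $\Pi'$ in $O(r)$ rounds.
   Context: An LCL problem $\Pi=(\Sigma_{\mathrm{in}},\Sigma_{\mathrm{out}},C,r)$: $\Sigma_{\mathrm{in}},\Sigma_{\mathrm{out}}$ finite label sets, $r$ a constant, $C$ a finite set of pairs $(H,v)$ with $H$ a graph, $v$ a node of $H$ of radius at most $r$ in $H$, every half-edge (node-edge pair) of $H$ labeled with an input and an output label; solving $\Pi$ on a bounded-degree graph with input labels on half-edges means assigning output labels to half-edges so that every labeled radius-$r$ ball is isomorphic to an element of $C$. A node-edge checkable problem $\Pi'=(\Sigma'_{\mathrm{in}},\Sigma'_{\mathrm{out}},C'_W,C'_B)$: $\Sigma'_{\mathrm{in}},\Sigma'_{\mathrm{out}}$ finite label sets; $C'_W$ and $C'_B$ are sets of multisets of pairs $(i,o)\in\Sigma'_{\mathrm{in}}\times\Sigma'_{\mathrm{out}}$. Solving $\Pi'$ on a graph whose half-edges carry input labels means assigning an output label to every half-edge such that for every node the multiset of (input, output) pairs on its incident half-edges lies in $C'_W$ and for every edge the multiset of (input, output) pairs of its two half-edges lies in $C'_B$. Rounds refer to synchronous distributed communication rounds on the input graph. *)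

theory Defs
  imports Main "HOL-Library.Multiset"
begin

section \<open>Graphs on natural-number vertices (vertex names double as unique IDs)\<close>

text \<open>A half-edge is a pair (v,u) with E v u (the half-edge of edge {v,u} at v).\<close>

definition adj :: "nat set \<Rightarrow> (nat \<Rightarrow> nat \<Rightarrow> bool) \<Rightarrow> nat \<Rightarrow> nat \<Rightarrow> bool" where
  "adj V E x y \<longleftrightarrow> x \<in> V \<and> y \<in> V \<and> E x y"

definition simple_graph :: "nat set \<Rightarrow> (nat \<Rightarrow> nat \<Rightarrow> bool) \<Rightarrow> bool" where
  "simple_graph V E \<longleftrightarrow> finite V \<and> (\<forall>x y. E x y \<longrightarrow> x \<in> V \<and> y \<in> V)
     \<and> (\<forall>x y. E x y \<longrightarrow> E y x) \<and> (\<forall>x. \<not> E x x)"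

definition connected_graph :: "nat set \<Rightarrow> (nat \<Rightarrow> nat \<Rightarrow> bool) \<Rightarrow> bool" where
  "connected_graph V E \<longleftrightarrow> (\<forall>x\<in>V. \<forall>y\<in>V. (adj V E)\<^sup>*\<^sup>* x y)"

definition is_cycle :: "(nat \<Rightarrow> nat \<Rightarrow> bool) \<Rightarrow> nat list \<Rightarrow> bool" where
  "is_cycle E xs \<longleftrightarrow> length xs \<ge> 3 \<and> distinct xs
     \<and> (\<forall>k. Suc k < length xs \<longrightarrow> E (xs ! k) (xs ! Suc k)) \<and> E (last xs) (hd xs)"

definition is_tree :: "nat set \<Rightarrow> (nat \<Rightarrow> nat \<Rightarrow> bool) \<Rightarrow> bool" where
  "is_tree V E \<longleftrightarrow> simple_graph V E \<and> V \<noteq> {} \<and> connected_graph V E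
     \<and> (\<nexists>xs. is_cycle E xs)"

definition max_degree_le :: "nat \<Rightarrow> nat set \<Rightarrow> (nat \<Rightarrow> nat \<Rightarrow> bool) \<Rightarrow> bool" where
  "max_degree_le \<Delta> V E \<longleftrightarrow> (\<forall>v\<in>V. card {u. E v u} \<le> \<Delta>)"

definition bd_tree :: "nat \<Rightarrow> nat set \<Rightarrow> (nat \<Rightarrow> nat \<Rightarrow> bool) \<Rightarrow> bool" where
  "bd_tree \<Delta> V E \<longleftrightarrow> is_tree V E \<and> max_degree_le \<Delta> V E"

definition ball :: "nat set \<Rightarrow> (nat \<Rightarrow> nat \<Rightarrow> bool) \<Rightarrow> nat \<Rightarrow> nat \<Rightarrow> nat set" where
  "ball V E T v = {x. \<exists>k\<le>T. (adj V E ^^ k) v x}"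

record ('i, 'o) cgraph =
  cV :: "nat set"
  cE :: "nat \<Rightarrow> nat \<Rightarrow> bool"
  cin :: "nat \<times> nat \<Rightarrow> 'i"
  cout :: "nat \<times> nat \<Rightarrow> 'o"
  ctr :: nat

definition is_lcl :: "'i set \<Rightarrow> 'o set \<Rightarrow> ('i, 'o) cgraph set \<Rightarrow> nat \<Rightarrow> bool" where
  "is_lcl Sin Sout C r \<longleftrightarrow> finite Sin \<and> finite Sout \<and> finite C \<and>
     (\<forall>H\<in>C. simple_graph (cV H) (cE H) \<and> ctr H \<in> cV H
        \<and> cV H \<subseteq> ball (cV H) (cE H) r (ctr H)
        \<and> (\<forall>x y. cE H x y \<longrightarrow> cin H (x, y) \<in> Sin \<and> cout H (x, y) \<in> Sout))"

definition ball_iso :: "nat set \<Rightarrow> (nat \<Rightarrow> nat \<Rightarrow> bool) \<Rightarrow> (nat \<times> nat \<Rightarrow> 'i)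
    \<Rightarrow> (nat \<times> nat \<Rightarrow> 'o) \<Rightarrow> nat \<Rightarrow> nat \<Rightarrow> ('i, 'o) cgraph \<Rightarrow> bool" where
  "ball_iso V E i out r v H \<longleftrightarrow> (\<exists>f. bij_betw f (ball V E r v) (cV H) \<and> f v = ctr H
     \<and> (\<forall>x\<in>ball V E r v. \<forall>y\<in>ball V E r v.
          (E x y \<longleftrightarrow> cE H (f x) (f y))
          \<and> (E x y \<longrightarrow> i (x, y) = cin H (f x, f y) \<and> out (x, y) = cout H (f x, f y))))"

definition solves_lcl :: "'i set \<Rightarrow> 'o set \<Rightarrow> ('i, 'o) cgraph set \<Rightarrow> nat
    \<Rightarrow> nat set \<Rightarrow> (nat \<Rightarrow> nat \<Rightarrow> bool) \<Rightarrow> (nat \<times> nat \<Rightarrow> 'i) \<Rightarrow> (nat \<times> nat \<Rightarrow> 'o) \<Rightarrow> bool" where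
  "solves_lcl Sin Sout C r V E i out \<longleftrightarrow>
     (\<forall>x y. E x y \<longrightarrow> out (x, y) \<in> Sout) \<and> (\<forall>v\<in>V. \<exists>H\<in>C. ball_iso V E i out r v H)"

definition is_necp :: "'i set \<Rightarrow> 'o set \<Rightarrow> ('i \<times> 'o) multiset set \<Rightarrow> ('i \<times> 'o) multiset set \<Rightarrow> bool" where
  "is_necp Sin Sout CW CB \<longleftrightarrow> finite Sin \<and> finite Sout \<and> finite CW \<and> finite CB
     \<and> (\<forall>M\<in>CW. set_mset M \<subseteq> Sin \<times> Sout) \<and> (\<forall>M\<in>CB. set_mset M \<subseteq> Sin \<times> Sout)"

definition solves_necp :: "'o set \<Rightarrow> ('i \<times> 'o) multiset set \<Rightarrow> ('i \<times> 'o) multiset set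
    \<Rightarrow> nat set \<Rightarrow> (nat \<Rightarrow> nat \<Rightarrow> bool) \<Rightarrow> (nat \<times> nat \<Rightarrow> 'i) \<Rightarrow> (nat \<times> nat \<Rightarrow> 'o) \<Rightarrow> bool" where
  "solves_necp Sout CW CB V E i out \<longleftrightarrow>
     (\<forall>x y. E x y \<longrightarrow> out (x, y) \<in> Sout)
     \<and> (\<forall>v\<in>V. image_mset (\<lambda>u. (i (v, u), out (v, u))) (mset_set {u. E v u}) \<in> CW)
     \<and> (\<forall>u v. E u v \<longrightarrow> {# (i (u, v), out (u, v)), (i (v, u), out (v, u)) #} \<in> CB)"

definition same_view :: "nat \<Rightarrow> nat set \<Rightarrow> (nat \<Rightarrow> nat \<Rightarrow> bool) \<Rightarrow> (nat \<times> nat \<Rightarrow> 'a)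
    \<Rightarrow> nat set \<Rightarrow> (nat \<Rightarrow> nat \<Rightarrow> bool) \<Rightarrow> (nat \<times> nat \<Rightarrow> 'a) \<Rightarrow> nat \<Rightarrow> bool" where
  "same_view T V E l V' E' l' v \<longleftrightarrow> ball V E T v = ball V' E' T v
     \<and> (\<forall>x\<in>ball V E T v. \<forall>y\<in>ball V E T v.
          (E x y \<longleftrightarrow> E' x y) \<and> (E x y \<longrightarrow> l (x, y) = l' (x, y)))"

text \<open>A map from labeled instances to half-edge labelings is computable in T rounds on
  trees of maximum degree at most Delta if the output on every half-edge of v depends only
  on the radius-T view of v (topology, vertex identifiers = names, and input labels).\<close>
definition local_alg :: "nat \<Rightarrow> nat \<Rightarrow> (nat set \<Rightarrow> (nat \<Rightarrow> nat \<Rightarrow> bool) \<Rightarrow> (nat \<times> nat \<Rightarrow> 'a)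
    \<Rightarrow> nat \<times> nat \<Rightarrow> 'b) \<Rightarrow> bool" where
  "local_alg \<Delta> T A \<longleftrightarrow> (\<forall>V E l V' E' l' v.
     bd_tree \<Delta> V E \<and> bd_tree \<Delta> V' E' \<and> v \<in> V \<and> v \<in> V' \<and> same_view T V E l V' E' l' v
     \<longrightarrow> (\<forall>u. E v u \<longrightarrow> A V E l (v, u) = A V' E' l' (v, u)))"

definition inputs_in :: "'i set \<Rightarrow> (nat \<Rightarrow> nat \<Rightarrow> bool) \<Rightarrow> (nat \<times> nat \<Rightarrow> 'i) \<Rightarrow> bool" where
  "inputs_in Sin E i \<longleftrightarrow> (\<forall>x y. E x y \<longrightarrow> i (x, y) \<in> Sin)"

end

theory Submission
  imports Defs
begin


fun wk :: "(nat \<Rightarrow> nat \<Rightarrow> bool) \<Rightarrow> nat list \<Rightarrow> bool" where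
  "wk E (a # b # zs) = (E a b \<and> wk E (b # zs))"
| "wk E _ = True"

fun nb :: "nat list \<Rightarrow> bool" where
  "nb (a # b # c # zs) = (a \<noteq> c \<and> nb (b # c # zs))"
| "nb _ = True"

lemma wk_nth: "wk E xs \<Longrightarrow> Suc k < length xs \<Longrightarrow> E (xs ! k) (xs ! Suc k)"
proof (induction E xs arbitrary: k rule: wk.induct)
  case (1 E a b zs)
  then show ?case by (cases k) auto
qed auto

lemma wk_append: "wk E (xs @ y # ys) \<longleftrightarrow> wk E (xs @ [y]) \<and> wk E (y # ys)"
proof (induction xs)
  case Nil
  then show ?case by (cases ys) auto
next
  case (Cons a xs)
  then show ?case by (cases xs) auto
qed

lemma wk_prefix: "wk E (xs @ ys) \<Longrightarrow> wk E xs"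
proof (induction xs)
  case (Cons a xs)
  then show ?case by (cases xs) auto
qed auto

lemma wk_rev: assumes "\<forall>x y. E x y \<longrightarrow> E y x" shows "wk E xs \<Longrightarrow> wk E (rev xs)"
proof (induction xs)
  case (Cons a xs)
  then show ?case
  proof (cases xs)
    case (Cons b zs)
    with Cons.prems Cons.IH have "wk E (rev xs)" "E b a" using assms by auto
    then show ?thesis using Cons wk_append[of E "rev zs" b "[a]"] by auto
  qed simp
qed simp

lemma nb_append: "nb (xs @ [a, b] @ ys) \<longleftrightarrow> nb (xs @ [a, b]) \<and> nb (a # b # ys)"
proof (induction xs)
  case Nil
  then show ?case by simp
next
  case (Cons x xs)
  show ?case
  proof (cases xs)
    case Nil
    then show ?thesis using Cons by (cases ys) auto
  next
    case (Cons y zs)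
    then show ?thesis using Cons.IH by (cases zs) auto
  qed
qed

lemma distinct_nb: "distinct xs \<Longrightarrow> nb xs"
  by (induction xs rule: nb.induct) auto

lemma nb_tail: "nb (a # xs) \<Longrightarrow> nb xs"
  by (cases xs rule: nb.cases) auto

lemma wk_tail: "wk E (a # xs) \<Longrightarrow> wk E xs"
  by (cases xs) auto

lemma L1:
  assumes irr: "\<forall>x. \<not> E x x"
  shows "wk E xs \<Longrightarrow> nb xs \<Longrightarrow> \<not> distinct xs \<Longrightarrow> \<exists>c. is_cycle E c"
proof (induction xs)
  case Nil
  then show ?case by simp
next
  case (Cons x xs)
  show ?case
  proof (cases "distinct xs")
    case False
    then show ?thesis using Cons nb_tail wk_tail by blast
  next
    case True
    with Cons.prems have "x \<in> set xs" by auto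
    then obtain ys zs where xs: "xs = ys @ x # zs" and nx: "x \<notin> set ys"
      using split_list_first by metis
    have wk1: "wk E ((x # ys) @ x # zs)" using Cons.prems xs by simp
    then have wk2: "wk E ((x # ys) @ [x])" using wk_append by blast
    have dys: "distinct ys" using True xs by simp
    have "ys \<noteq> []" using wk2 irr by auto
    then obtain y ys' where ys: "ys = y # ys'" by (cases ys) auto
    have "ys' \<noteq> []"
    proof
      assume "ys' = []"
      then have "nb (x # y # x # zs)" using Cons.prems xs ys by simp
      then show False by simp
    qed
    define c where "c = x # ys"
    have "is_cycle E c" unfolding is_cycle_def
    proof (intro conjI allI impI)
      show "3 \<le> length c" using \<open>ys' \<noteq> []\<close> ys c_def by (cases ys') auto
      show "distinct c" using c_def nx dys by simp
      fix k assume "Suc k < length c"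
      then show "E (c ! k) (c ! Suc k)" using wk_nth[OF wk_prefix[OF wk2]] c_def by simp
    next
      have "Suc (length ys) < length ((x # ys) @ [x])" by simp
      from wk_nth[OF wk2 this] show "E (last c) (hd c)"
        using c_def \<open>ys \<noteq> []\<close> by (simp add: nth_append last_conv_nth)
    qed
    then show ?thesis by blast
  qed
qed

definition acyc :: "(nat \<Rightarrow> nat \<Rightarrow> bool) \<Rightarrow> bool" where
  "acyc E \<longleftrightarrow> (\<forall>x. \<not> E x x) \<and> (\<forall>x y. E x y \<longrightarrow> E y x) \<and> (\<nexists>c. is_cycle E c)"

lemma nb_wk_distinct: "acyc E \<Longrightarrow> wk E xs \<Longrightarrow> nb xs \<Longrightarrow> distinct xs"
  using L1 unfolding acyc_def by blast

lemma hd_last_nd: "hd W = last W \<Longrightarrow> 2 \<le> length W \<Longrightarrow> \<not> distinct W"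
proof (cases W)
  case (Cons a W')
  assume h: "hd W = last W" "2 \<le> length W"
  then have "W' \<noteq> []" using Cons by auto
  then have "a \<in> set W'" using h Cons last_in_set by fastforce
  then show ?thesis using Cons by simp
qed simp

lemma P1:
  assumes ac: "acyc E"
  shows "wk E xs \<Longrightarrow> distinct xs \<Longrightarrow> wk E ys \<Longrightarrow> distinct ys \<Longrightarrow> xs \<noteq> [] \<Longrightarrow> ys \<noteq> []
    \<Longrightarrow> hd xs = hd ys \<Longrightarrow> last xs = last ys \<Longrightarrow> xs = ys"
proof (induction xs arbitrary: ys)
  case Nil
  then show ?case by simp
next
  case (Cons v xs)
  obtain ys' where ys: "ys = v # ys'" using Cons.prems by (cases ys) auto
  show ?case
  proof (cases xs)
    case Nil
    then have "last ys = v" using Cons.prems by simp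
    then show ?thesis using Cons.prems ys Nil by (cases ys' rule: rev_cases) auto
  next
    case (Cons a xs')
    have "ys' \<noteq> []"
    proof
      assume "ys' = []"
      then have "last (v # xs) = v" using Cons.prems ys by simp
      then show False using Cons.prems Cons by (cases xs' rule: rev_cases) auto
    qed
    then obtain b ys'' where ys': "ys' = b # ys''" by (cases ys') auto
    show ?thesis
    proof (cases "a = b")
      case True
      have "xs = ys'"
        using Cons.IH[of ys'] Cons.prems ys ys' Cons True by (auto simp: wk_tail)
      then show ?thesis using ys by simp
    next
      case False
      define W where "W = rev (v # xs) @ ys'"
      have sym: "\<forall>x y. E x y \<longrightarrow> E y x" using ac acyc_def by blast
      have "wk E W"
      proof -
        have "wk E (rev (v # xs))" using wk_rev[OF sym] Cons.prems by blast
        moreover have "wk E (v # ys')" using Cons.prems ys by simp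
        ultimately show ?thesis unfolding W_def using wk_append[of E "rev xs" v ys'] by simp
      qed
      moreover have "nb W"
      proof -
        have "W = rev xs' @ [a, v] @ b # ys''" using W_def Cons ys' by simp
        moreover have "nb (rev xs' @ [a, v])"
          using distinct_nb[of "rev (v # xs)"] Cons.prems Cons by simp
        moreover have "nb (a # v # b # ys'')"
          using distinct_nb[of "v # ys'"] Cons.prems ys ys' False by simp
        ultimately show ?thesis using nb_append by metis
      qed
      moreover have "\<not> distinct W"
      proof -
        have "hd W = last (v # xs)" unfolding W_def by (simp add: hd_rev)
        moreover have "last W = last ys" unfolding W_def using ys ys' by simp
        moreover have "length W \<ge> 2" unfolding W_def using Cons ys' by simp
        ultimately have "hd W = last W" "length W \<ge> 2" using Cons.prems by auto
        then show ?thesis using hd_last_nd by blast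
      qed
      ultimately show ?thesis using nb_wk_distinct[OF ac] by blast
    qed
  qed
qed


lemma two_eq: "{#X, Y#} = {#Z, W#} \<Longrightarrow> (X = Z \<and> Y = W) \<or> (X = W \<and> Y = Z)"
  by (auto simp: add_eq_conv_ex)
lemma fin_ms: assumes "finite X" shows "finite {M. set_mset M \<subseteq> X \<and> size M \<le> n}"
proof -
  have "{M. set_mset M \<subseteq> X \<and> size M \<le> n} \<subseteq> mset ` {xs. set xs \<subseteq> X \<and> length xs \<le> n}"
  proof
    fix M assume "M \<in> {M. set_mset M \<subseteq> X \<and> size M \<le> n}"
    moreover obtain xs where "mset xs = M" using ex_mset by blast
    ultimately show "M \<in> mset ` {xs. set xs \<subseteq> X \<and> length xs \<le> n}" by auto
  qed
  then show ?thesis using finite_lists_length_le[OF assms] finite_surj by blast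
qed


definition pinj :: "(nat \<Rightarrow> nat \<Rightarrow> bool) \<Rightarrow> (nat \<times> nat \<Rightarrow> nat) \<Rightarrow> bool" where
  "pinj E p \<longleftrightarrow> (\<forall>x. inj_on (\<lambda>y. p (x, y)) {y. E x y})"

definition nbr :: "(nat \<Rightarrow> nat \<Rightarrow> bool) \<Rightarrow> (nat \<times> nat \<Rightarrow> nat) \<Rightarrow> nat \<Rightarrow> nat \<Rightarrow> nat option" where
  "nbr E p x q = (if \<exists>y. E x y \<and> p (x, y) = q then Some (SOME y. E x y \<and> p (x, y) = q) else None)"

fun walk :: "(nat \<Rightarrow> nat \<Rightarrow> bool) \<Rightarrow> (nat \<times> nat \<Rightarrow> nat) \<Rightarrow> nat \<Rightarrow> nat list \<Rightarrow> nat option" where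
  "walk E p x [] = Some x"
| "walk E p x (q # w) = (case nbr E p x q of None \<Rightarrow> None | Some y \<Rightarrow> walk E p y w)"

definition loc :: "(nat \<Rightarrow> nat \<Rightarrow> bool) \<Rightarrow> (nat \<times> nat \<Rightarrow> 'i) \<Rightarrow> (nat \<times> nat \<Rightarrow> 'o) \<Rightarrow> (nat \<times> nat \<Rightarrow> nat)
   \<Rightarrow> nat \<Rightarrow> nat \<Rightarrow> ('i \<times> 'o \<times> nat) option" where
  "loc E i out p x = (\<lambda>q. map_option (\<lambda>y. (i (x, y), out (x, y), p (y, x))) (nbr E p x q))"

definition pv :: "(nat \<Rightarrow> nat \<Rightarrow> bool) \<Rightarrow> (nat \<times> nat \<Rightarrow> 'i) \<Rightarrow> (nat \<times> nat \<Rightarrow> 'o) \<Rightarrow> (nat \<times> nat \<Rightarrow> nat)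
   \<Rightarrow> nat \<Rightarrow> nat \<Rightarrow> nat list \<Rightarrow> (nat \<Rightarrow> ('i \<times> 'o \<times> nat) option) option" where
  "pv E i out p k x = (\<lambda>w. if length w \<le> k then map_option (loc E i out p) (walk E p x w) else None)"

fun nbw :: "(nat \<Rightarrow> nat \<Rightarrow> bool) \<Rightarrow> (nat \<times> nat \<Rightarrow> nat) \<Rightarrow> nat \<Rightarrow> nat list \<Rightarrow> bool" where
  "nbw E p x [] = True"
| "nbw E p x (q # w) = (case nbr E p x q of None \<Rightarrow> False | Some y \<Rightarrow>
      (case w of [] \<Rightarrow> True | q2 # _ \<Rightarrow> q2 \<noteq> p (y, x)) \<and> nbw E p y w)"

fun vl :: "(nat \<Rightarrow> nat \<Rightarrow> bool) \<Rightarrow> (nat \<times> nat \<Rightarrow> nat) \<Rightarrow> nat \<Rightarrow> nat list \<Rightarrow> nat list" where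
  "vl E p x [] = [x]"
| "vl E p x (q # w) = x # (case nbr E p x q of None \<Rightarrow> [] | Some y \<Rightarrow> vl E p y w)"

fun pseq :: "(nat \<times> nat \<Rightarrow> nat) \<Rightarrow> nat list \<Rightarrow> nat list" where
  "pseq p (a # b # zs) = p (a, b) # pseq p (b # zs)"
| "pseq p _ = []"

lemma nbr_SomeD: "nbr E p x q = Some y \<Longrightarrow> E x y \<and> p (x, y) = q"
proof -
  assume h: "nbr E p x q = Some y"
  then have ex: "\<exists>y. E x y \<and> p (x, y) = q" unfolding nbr_def by (auto split: if_splits)
  then have "y = (SOME y. E x y \<and> p (x, y) = q)" using h unfolding nbr_def by simp
  then show ?thesis using someI_ex[OF ex] by simp
qed

lemma nbr_Some: "pinj E p \<Longrightarrow> nbr E p x q = Some y \<longleftrightarrow> E x y \<and> p (x, y) = q"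
proof
  assume "nbr E p x q = Some y"
  then show "E x y \<and> p (x, y) = q" by (rule nbr_SomeD)
next
  assume pi: "pinj E p" and h: "E x y \<and> p (x, y) = q"
  then have ex: "\<exists>y. E x y \<and> p (x, y) = q" by blast
  let ?z = "SOME y. E x y \<and> p (x, y) = q"
  have z: "E x ?z \<and> p (x, ?z) = q" using someI_ex[OF ex] .
  have "?z = y" using pi h z unfolding pinj_def inj_on_def by auto
  then show "nbr E p x q = Some y" unfolding nbr_def using ex by simp
qed

lemma nbr_None: "nbr E p x q = None \<longleftrightarrow> (\<forall>y. E x y \<longrightarrow> p (x, y) \<noteq> q)"
  unfolding nbr_def by auto

lemma walk_append: "walk E p x (w @ w') = (case walk E p x w of None \<Rightarrow> None | Some z \<Rightarrow> walk E p z w')"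
  by (induction w arbitrary: x) (auto split: option.splits)

lemma nbw_walk: "nbw E p x w \<Longrightarrow> walk E p x w \<noteq> None"
  by (induction w arbitrary: x) (auto split: option.splits)

lemma nbw_prefix: "nbw E p x (w @ w') \<Longrightarrow> nbw E p x w"
proof (induction w arbitrary: x)
  case (Cons q w)
  show ?case
  proof (cases "nbr E p x q")
    case (Some y)
    then have "nbw E p y (w @ w')" using Cons.prems by simp
    then have "nbw E p y w" using Cons.IH by blast
    then show ?thesis using Some Cons.prems by (cases w) auto
  qed (use Cons.prems in simp)
qed simp

lemma nbw_snoc1: "nbw E p x [q] \<longleftrightarrow> nbr E p x q \<noteq> None"
  by (auto split: option.splits)

lemma nbw_snoc2: "nbw E p x (w0 @ [q0, q]) \<longleftrightarrow> nbw E p x (w0 @ [q0]) \<and>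
   (\<exists>z y. walk E p x w0 = Some z \<and> nbr E p z q0 = Some y \<and> nbr E p y q \<noteq> None \<and> q \<noteq> p (y, z))"
proof (induction w0 arbitrary: x)
  case Nil
  then show ?case by (auto split: option.splits)
next
  case (Cons a w0)
  show ?case
  proof (cases "nbr E p x a")
    case None
    then show ?thesis by simp
  next
    case (Some y)
    then show ?thesis using Cons.IH[of y] by (cases w0) (auto split: option.splits)
  qed
qed

lemma vl_props: "walk E p x w = Some z \<Longrightarrow>
   vl E p x w \<noteq> [] \<and> hd (vl E p x w) = x \<and> last (vl E p x w) = z \<and> wk E (vl E p x w)
   \<and> pseq p (vl E p x w) = w \<and> (nbw E p x w \<longrightarrow> nb (vl E p x w))"
proof (induction w arbitrary: x)
  case Nil
  then show ?case by simp
next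
  case (Cons q w)
  then obtain y where y: "nbr E p x q = Some y" and wy: "walk E p y w = Some z"
    by (auto split: option.splits)
  note IH = Cons.IH[OF wy]
  have e: "E x y \<and> p (x, y) = q" using nbr_SomeD[OF y] .
  obtain t where t: "vl E p y w = y # t" using IH by (cases "vl E p y w") auto
  have nbpart: "nbw E p x (q # w) \<longrightarrow> nb (vl E p x (q # w))"
  proof
    assume nq: "nbw E p x (q # w)"
    then have nw: "nbw E p y w" using y by simp
    then have nbt: "nb (y # t)" using IH t by simp
    show "nb (vl E p x (q # w))"
    proof (cases w)
      case Nil
      then show ?thesis using y by simp
    next
      case (Cons q2 w')
      then have "q2 \<noteq> p (y, x)" using nq y by simp
      obtain u where u: "nbr E p y q2 = Some u" using nw Cons by (auto split: option.splits)
      obtain s where s: "vl E p u w' = u # s" by (cases w') auto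
      have "u \<noteq> x" using nbr_SomeD[OF u] \<open>q2 \<noteq> p (y, x)\<close> by auto
      moreover have "vl E p y w = y # u # s" using Cons u s by simp
      ultimately show ?thesis using y nbt t by simp
    qed
  qed
  show ?case using IH y e t nbpart by simp
qed



lemma UNIQ:
  assumes ac: "acyc E" and n1: "nbw E p x w1" and n2: "nbw E p x w2"
    and w1: "walk E p x w1 = Some z" and w2: "walk E p x w2 = Some z"
  shows "w1 = w2"
proof -
  define l1 where "l1 = vl E p x w1"
  define l2 where "l2 = vl E p x w2"
  have a: "l1 \<noteq> []" "hd l1 = x" "last l1 = z" "wk E l1" "pseq p l1 = w1" "nb l1"
    using vl_props[OF w1] n1 unfolding l1_def by auto
  have b: "l2 \<noteq> []" "hd l2 = x" "last l2 = z" "wk E l2" "pseq p l2 = w2" "nb l2"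
    using vl_props[OF w2] n2 unfolding l2_def by auto
  have "distinct l1" using nb_wk_distinct[OF ac a(4) a(6)] .
  moreover have "distinct l2" using nb_wk_distinct[OF ac b(4) b(6)] .
  ultimately have "l1 = l2" using P1[OF ac a(4) _ b(4) _ a(1) b(1)] a(2,3) b(2,3) by simp
  then show ?thesis using a(5) b(5) by simp
qed

lemma walk_relpow:
  assumes sg: "simple_graph V E"
  shows "x \<in> V \<Longrightarrow> walk E p x w = Some z \<Longrightarrow> (adj V E ^^ length w) x z"
proof (induction w arbitrary: x)
  case Nil
  then show ?case by simp
next
  case (Cons q w)
  then obtain y where y: "nbr E p x q = Some y" and wy: "walk E p y w = Some z"
    by (auto split: option.splits)
  have "E x y" using nbr_SomeD[OF y] by simp
  then have "y \<in> V" "adj V E x y" using sg Cons.prems unfolding simple_graph_def adj_def by auto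
  then show ?case using Cons.IH[OF _ wy] relpowp_Suc_I2 by fastforce
qed

lemma SURJ:
  assumes sg: "simple_graph V E" and pi: "pinj E p"
  shows "(adj V E ^^ k) v x \<Longrightarrow> \<exists>w. nbw E p v w \<and> length w \<le> k \<and> walk E p v w = Some x"
proof (induction k arbitrary: x)
  case 0
  then show ?case by (intro exI[of _ "[]"]) simp
next
  case (Suc k)
  then obtain y where ky: "(adj V E ^^ k) v y" and a: "adj V E y x" by (auto elim: relpowp_Suc_E)
  from Suc.IH[OF ky] obtain w where w: "nbw E p v w" "length w \<le> k" "walk E p v w = Some y" by blast
  have Eyx: "E y x" using a adj_def by blast
  have nx: "nbr E p y (p (y, x)) = Some x" using nbr_Some[OF pi] Eyx by blast
  show ?case
  proof (cases w rule: rev_cases)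
    case Nil
    then show ?thesis using w nx by (intro exI[of _ "[p (y, x)]"]) auto
  next
    case (snoc w0 q0)
    then obtain z where z: "walk E p v w0 = Some z" and zy: "nbr E p z q0 = Some y"
      using w(3) by (auto simp: walk_append split: option.splits)
    show ?thesis
    proof (cases "x = z")
      case True
      then show ?thesis using nbw_prefix[of E p v w0 "[q0]"] w snoc z
        by (intro exI[of _ w0]) auto
    next
      case False
      have "E z y" using nbr_SomeD[OF zy] by simp
      then have "E y z" using sg unfolding simple_graph_def by blast
      then have "p (y, x) \<noteq> p (y, z)" using pi Eyx False unfolding pinj_def inj_on_def by blast
      then have "nbw E p v (w0 @ [q0, p (y, x)])" using nbw_snoc2 w snoc z zy nx by fastforce
      moreover have "walk E p v (w0 @ [q0, p (y, x)]) = Some x" using z zy nx by (simp add: walk_append)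
      ultimately show ?thesis using w snoc by (intro exI[of _ "w0 @ [q0, p (y, x)]"]) auto
    qed
  qed
qed

definition nwset :: "(nat \<Rightarrow> nat \<Rightarrow> bool) \<Rightarrow> (nat \<times> nat \<Rightarrow> nat) \<Rightarrow> nat \<Rightarrow> nat \<Rightarrow> nat list set" where
  "nwset E p r v = {w. length w \<le> r \<and> nbw E p v w}"

lemma BIJ:
  assumes sg: "simple_graph V E" and ac: "acyc E" and pi: "pinj E p" and v: "v \<in> V"
  shows "bij_betw (\<lambda>w. the (walk E p v w)) (nwset E p r v) (ball V E r v)"
  unfolding bij_betw_def
proof
  show "inj_on (\<lambda>w. the (walk E p v w)) (nwset E p r v)"
  proof (rule inj_onI)
    fix w1 w2 assume h: "w1 \<in> nwset E p r v" "w2 \<in> nwset E p r v"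
      "the (walk E p v w1) = the (walk E p v w2)"
    then obtain z1 z2 where "walk E p v w1 = Some z1" "walk E p v w2 = Some z2"
      using nbw_walk unfolding nwset_def by blast
    then show "w1 = w2" using UNIQ[OF ac] h unfolding nwset_def by auto
  qed
  show "(\<lambda>w. the (walk E p v w)) ` nwset E p r v = ball V E r v"
  proof
    show "(\<lambda>w. the (walk E p v w)) ` nwset E p r v \<subseteq> ball V E r v"
    proof
      fix x assume "x \<in> (\<lambda>w. the (walk E p v w)) ` nwset E p r v"
      then obtain w where w: "w \<in> nwset E p r v" "x = the (walk E p v w)" by blast
      then obtain z where z: "walk E p v w = Some z" using nbw_walk unfolding nwset_def by blast
      then have "(adj V E ^^ length w) v x" using walk_relpow[OF sg v] w by simp
      then show "x \<in> ball V E r v" using w unfolding ball_def nwset_def by auto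
    qed
    show "ball V E r v \<subseteq> (\<lambda>w. the (walk E p v w)) ` nwset E p r v"
    proof
      fix x assume "x \<in> ball V E r v"
      then obtain k where "k \<le> r" "(adj V E ^^ k) v x" unfolding ball_def by blast
      then obtain w where "nbw E p v w" "length w \<le> k" "walk E p v w = Some x"
        using SURJ[OF sg pi] by blast
      then show "x \<in> (\<lambda>w. the (walk E p v w)) ` nwset E p r v"
        using \<open>k \<le> r\<close> unfolding nwset_def by (intro image_eqI[of _ _ w]) auto
    qed
  qed
qed

lemma pv_Nil: "pv E i out p k x [] = Some (loc E i out p x)"
  unfolding pv_def by simp

lemma pv_Cons: "pv E i out p k x (q # w) = (if k = 0 then None else
   (case nbr E p x q of None \<Rightarrow> None | Some y \<Rightarrow> pv E i out p (k - 1) y w))"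
  unfolding pv_def by (auto split: option.splits)

lemma loc_Some: "nbr E p x q = Some y \<Longrightarrow> loc E i out p x q = Some (i (x, y), out (x, y), p (y, x))"
  unfolding loc_def by simp

lemma loc_None: "loc E i out p x q = None \<longleftrightarrow> nbr E p x q = None"
  unfolding loc_def by simp

lemma PVSTEP:
  assumes eq: "pv E i out p k x = pv E' i' out' p' k x'" and y: "nbr E p x q = Some y"
  shows "\<exists>y'. nbr E' p' x' q = Some y' \<and> i (x, y) = i' (x', y') \<and> out (x, y) = out' (x', y')
     \<and> p (y, x) = p' (y', x') \<and> (0 < k \<longrightarrow> pv E i out p (k - 1) y = pv E' i' out' p' (k - 1) y')"
proof -
  have l: "loc E i out p x = loc E' i' out' p' x'" using fun_cong[OF eq, of "[]"] by (simp add: pv_Nil)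
  have "loc E' i' out' p' x' q \<noteq> None" using l loc_Some[OF y, of i out] by simp
  then obtain y' where y': "nbr E' p' x' q = Some y'" using loc_None by (metis not_Some_eq)
  have vals: "i (x, y) = i' (x', y') \<and> out (x, y) = out' (x', y') \<and> p (y, x) = p' (y', x')"
    using l loc_Some[OF y, of i out] loc_Some[OF y', of i' out'] by simp
  have "0 < k \<longrightarrow> pv E i out p (k - 1) y = pv E' i' out' p' (k - 1) y'"
  proof
    assume "0 < k"
    show "pv E i out p (k - 1) y = pv E' i' out' p' (k - 1) y'"
    proof
      fix w
      show "pv E i out p (k - 1) y w = pv E' i' out' p' (k - 1) y' w"
        using fun_cong[OF eq, of "q # w"] \<open>0 < k\<close> y y' by (simp add: pv_Cons)
    qed
  qed
  then show ?thesis using y' vals by blast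
qed

lemma PVNONE:
  assumes eq: "pv E i out p k x = pv E' i' out' p' k x'" and y: "nbr E p x q = None"
  shows "nbr E' p' x' q = None"
proof -
  have l: "loc E i out p x = loc E' i' out' p' x'" using fun_cong[OF eq, of "[]"] by (simp add: pv_Nil)
  then show ?thesis using y loc_None by metis
qed

lemma NWeq:
  "pv E i out p k x = pv E' i' out' p' k x' \<Longrightarrow> length w \<le> k \<Longrightarrow> nbw E p x w = nbw E' p' x' w"
proof (induction w arbitrary: x x' k)
  case Nil
  then show ?case by simp
next
  case (Cons q w)
  show ?case
  proof (cases "nbr E p x q")
    case None
    then show ?thesis using PVNONE[OF Cons.prems(1)] by simp
  next
    case (Some y)
    from PVSTEP[OF Cons.prems(1) Some] obtain y' where y': "nbr E' p' x' q = Some y'"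
      "p (y, x) = p' (y', x')" "pv E i out p (k - 1) y = pv E' i' out' p' (k - 1) y'"
      using Cons.prems(2) by auto
    have "nbw E p y w = nbw E' p' y' w" using Cons.IH[OF y'(3)] Cons.prems(2) by simp
    then show ?thesis using Some y' by (cases w) auto
  qed
qed

lemma WALKeq:
  assumes eq: "pv E i out p k x = pv E' i' out' p' k x'" and l: "length w \<le> k"
    and z: "walk E p x w = Some z"
  shows "\<exists>z'. walk E' p' x' w = Some z' \<and> loc E i out p z = loc E' i' out' p' z'"
  using fun_cong[OF eq, of w] l z unfolding pv_def by (cases "walk E' p' x' w") auto

lemma EDGEWALK:
  assumes sg: "simple_graph V E" and ac: "acyc E" and pi: "pinj E p"
    and n1: "nbw E p v w1" and n2: "nbw E p v w2"
    and x: "walk E p v w1 = Some x" and y: "walk E p v w2 = Some y" and e: "E x y"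
  shows "w2 = w1 @ [p (x, y)] \<or> w1 = w2 @ [p (y, x)]"
proof (cases "nbw E p v (w1 @ [p (x, y)])")
  case True
  have "nbr E p x (p (x, y)) = Some y" using nbr_Some[OF pi] e by blast
  then have "walk E p v (w1 @ [p (x, y)]) = Some y" using x by (simp add: walk_append)
  then show ?thesis using UNIQ[OF ac True n2 _ y] by simp
next
  case False
  have nxy: "nbr E p x (p (x, y)) = Some y" using nbr_Some[OF pi] e by blast
  show ?thesis
  proof (cases w1 rule: rev_cases)
    case Nil
    then show ?thesis using False nxy x by simp
  next
    case (snoc w0 q0)
    then obtain z where z: "walk E p v w0 = Some z" and zx: "nbr E p z q0 = Some x"
      using x by (auto simp: walk_append split: option.splits)
    have "\<not> (p (x, y) \<noteq> p (x, z))" using False nbw_snoc2[of E p v w0 q0 "p (x, y)"] snoc n1 z zx nxy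
      by auto
    moreover have "E x z" using nbr_SomeD[OF zx] sg unfolding simple_graph_def by blast
    ultimately have "y = z" using pi e unfolding pinj_def inj_on_def by blast
    have n0: "nbw E p v w0" using nbw_prefix n1 snoc by blast
    have "w0 = w2" using UNIQ[OF ac n0 n2] z y \<open>y = z\<close> by simp
    moreover have "q0 = p (y, x)" using nbr_SomeD[OF zx] \<open>y = z\<close> by simp
    ultimately show ?thesis using snoc by simp
  qed
qed

lemma EDGE_TRANSFER:
  assumes sg: "simple_graph V E" and ac: "acyc E" and pi: "pinj E p" and pi': "pinj E' p'"
    and sg': "simple_graph V' E'" and eq: "pv E i out p r v = pv E' i' out' p' r v'"
    and w1: "w1 \<in> nwset E p r v" and w2: "w2 \<in> nwset E p r v"
    and x: "walk E p v w1 = Some x" and y: "walk E p v w2 = Some y" and e: "E x y"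
  shows "\<exists>x' y'. walk E' p' v' w1 = Some x' \<and> walk E' p' v' w2 = Some y' \<and> E' x' y'
     \<and> i (x, y) = i' (x', y') \<and> out (x, y) = out' (x', y')"
proof -
  have l1: "length w1 \<le> r" "nbw E p v w1" and l2: "length w2 \<le> r" "nbw E p v w2"
    using w1 w2 unfolding nwset_def by auto
  obtain x' where x': "walk E' p' v' w1 = Some x'" "loc E i out p x = loc E' i' out' p' x'"
    using WALKeq[OF eq l1(1) x] by blast
  obtain y' where y': "walk E' p' v' w2 = Some y'" "loc E i out p y = loc E' i' out' p' y'"
    using WALKeq[OF eq l2(1) y] by blast
  have nxy: "nbr E p x (p (x, y)) = Some y" using nbr_Some[OF pi] e by blast
  have "E y x" using e sg unfolding simple_graph_def by blast
  then have nyx: "nbr E p y (p (y, x)) = Some x" using nbr_Some[OF pi] by blast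
  have key: "nbr E' p' x' (p (x, y)) = Some y'"
    using EDGEWALK[OF sg ac pi l1(2) l2(2) x y e]
  proof
    assume h: "w2 = w1 @ [p (x, y)]"
    have "loc E' i' out' p' x' (p (x, y)) \<noteq> None" using x'(2) loc_Some[OF nxy, of i out] by simp
    then obtain y'' where y'': "nbr E' p' x' (p (x, y)) = Some y''" using loc_None by (metis not_Some_eq)
    then have "walk E' p' v' w2 = Some y''" using h x'(1) by (simp add: walk_append)
    then show ?thesis using y'' y'(1) by simp
  next
    assume h: "w1 = w2 @ [p (y, x)]"
    have "loc E' i' out' p' y' (p (y, x)) \<noteq> None" using y'(2) loc_Some[OF nyx, of i out] by simp
    then obtain x'' where x'': "nbr E' p' y' (p (y, x)) = Some x''" using loc_None by (metis not_Some_eq)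
    then have "walk E' p' v' w1 = Some x''" using h y'(1) by (simp add: walk_append)
    then have "x'' = x'" using x'(1) by simp
    have "p (x, y) = p' (x', y')" using y'(2) loc_Some[OF nyx, of i out] loc_Some[OF x'', of i' out'] \<open>x'' = x'\<close>
      by (metis Pair_inject option.inject)
    moreover have "E' y' x'" using nbr_SomeD[OF x''] \<open>x'' = x'\<close> by simp
    ultimately show ?thesis using nbr_Some[OF pi'] sg' unfolding simple_graph_def by metis
  qed
  have "E' x' y'" using nbr_SomeD[OF key] by simp
  moreover have "i (x, y) = i' (x', y') \<and> out (x, y) = out' (x', y')"
    using x'(2) loc_Some[OF nxy, of i out] loc_Some[OF key, of i' out'] by (metis Pair_inject option.inject)
  ultimately show ?thesis using x'(1) y'(1) by blast
qed



lemma walk_the: "nbw E p v w \<Longrightarrow> walk E p v w = Some (the (walk E p v w))"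
  using nbw_walk by fastforce

lemma ISO:
  assumes sg: "simple_graph V E" and ac: "acyc E" and pi: "pinj E p" and v: "v \<in> V"
    and sg': "simple_graph V' E'" and ac': "acyc E'" and pi': "pinj E' p'" and v': "v' \<in> V'"
    and eq: "pv E i out p r v = pv E' i' out' p' r v'"
  shows "\<exists>f. bij_betw f (ball V E r v) (ball V' E' r v') \<and> f v = v' \<and>
     (\<forall>x\<in>ball V E r v. \<forall>y\<in>ball V E r v. (E x y \<longleftrightarrow> E' (f x) (f y))
        \<and> (E x y \<longrightarrow> i (x, y) = i' (f x, f y) \<and> out (x, y) = out' (f x, f y)))"
proof -
  define g where "g = (\<lambda>w. the (walk E p v w))"
  define g' where "g' = (\<lambda>w. the (walk E' p' v' w))"
  define N where "N = nwset E p r v"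
  have NN: "nwset E' p' r v' = N" unfolding N_def nwset_def using NWeq[OF eq] by auto
  have bg: "bij_betw g N (ball V E r v)" using BIJ[OF sg ac pi v] unfolding g_def N_def .
  have bg': "bij_betw g' N (ball V' E' r v')" using BIJ[OF sg' ac' pi' v', of r] NN unfolding g'_def by simp
  define f where "f = g' \<circ> inv_into N g"
  have bf: "bij_betw f (ball V E r v) (ball V' E' r v')"
    unfolding f_def using bij_betw_trans[OF bij_betw_inv_into[OF bg] bg'] .
  have e0: "[] \<in> N" unfolding N_def nwset_def by simp
  have "g [] = v" unfolding g_def by simp
  then have "inv_into N g v = []" using bg e0 bij_betw_def inv_into_f_f by metis
  then have fv: "f v = v'" unfolding f_def g'_def by simp
  have main: "(E x y \<longleftrightarrow> E' (f x) (f y)) \<and> (E x y \<longrightarrow> i (x, y) = i' (f x, f y) \<and> out (x, y) = out' (f x, f y))"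
    if x: "x \<in> ball V E r v" and y: "y \<in> ball V E r v" for x y
  proof -
    define w1 where "w1 = inv_into N g x"
    define w2 where "w2 = inv_into N g y"
    have w1N: "w1 \<in> N" and w2N: "w2 \<in> N" unfolding w1_def w2_def
      using x y bg by (auto simp: bij_betw_def intro: inv_into_into)
    have gx: "g w1 = x" and gy: "g w2 = y" unfolding w1_def w2_def
      using x y bg by (auto simp: bij_betw_def f_inv_into_f)
    have wx: "walk E p v w1 = Some x" using walk_the[of E p v w1] w1N gx unfolding N_def nwset_def g_def by auto
    have wy: "walk E p v w2 = Some y" using walk_the[of E p v w2] w2N gy unfolding N_def nwset_def g_def by auto
    have fx: "f x = g' w1" and fy: "f y = g' w2" unfolding f_def w1_def w2_def by auto
    have w1N': "w1 \<in> nwset E' p' r v'" and w2N': "w2 \<in> nwset E' p' r v'" using NN w1N w2N by auto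
    have wx': "walk E' p' v' w1 = Some (f x)" using walk_the[of E' p' v' w1] w1N' fx unfolding nwset_def g'_def by auto
    have wy': "walk E' p' v' w2 = Some (f y)" using walk_the[of E' p' v' w2] w2N' fy unfolding nwset_def g'_def by auto
    have 1: "E x y \<longrightarrow> E' (f x) (f y) \<and> i (x, y) = i' (f x, f y) \<and> out (x, y) = out' (f x, f y)"
    proof
      assume "E x y"
      from EDGE_TRANSFER[OF sg ac pi pi' sg' eq w1N[unfolded N_def] w2N[unfolded N_def] wx wy this]
      show "E' (f x) (f y) \<and> i (x, y) = i' (f x, f y) \<and> out (x, y) = out' (f x, f y)"
        using wx' wy' by auto
    qed
    have 2: "E' (f x) (f y) \<longrightarrow> E x y"
    proof
      assume "E' (f x) (f y)"
      from EDGE_TRANSFER[OF sg' ac' pi' pi sg eq[symmetric] w1N' w2N' wx' wy' this]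
      show "E x y" using wx wy by auto
    qed
    show ?thesis using 1 2 by blast
  qed
  show ?thesis using bf fv main by blast
qed



definition rk :: "(nat \<Rightarrow> nat \<Rightarrow> bool) \<Rightarrow> nat \<times> nat \<Rightarrow> nat" where
  "rk E h = card {z. E (fst h) z \<and> z < snd h}"

lemma sg_fin: "simple_graph V E \<Longrightarrow> finite {z. E x z}"
  unfolding simple_graph_def by (metis (no_types, lifting) mem_Collect_eq rev_finite_subset subsetI)

lemma rk_lt: assumes "finite {z. E x z}" "E x y" shows "rk E (x, y) < card {z. E x z}"
proof -
  have "{z. E x z \<and> z < y} \<subset> {z. E x z}" using assms(2) by auto
  then show ?thesis unfolding rk_def using psubset_card_mono[OF assms(1)] by simp
qed

lemma rk_pinj: assumes sg: "simple_graph V E" shows "pinj E (rk E)"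
  unfolding pinj_def
proof (intro allI inj_onI)
  fix x y1 y2 assume h: "y1 \<in> {y. E x y}" "y2 \<in> {y. E x y}" "rk E (x, y1) = rk E (x, y2)"
  have fin: "finite {z. E x z}" using sg_fin[OF sg] .
  have less: "rk E (x, a) < rk E (x, b)" if "E x a" "a < b" for a b
  proof -
    have "{z. E x z \<and> z < a} \<subset> {z. E x z \<and> z < b}" using that by auto
    moreover have fb: "finite {z. E x z \<and> z < b}" using fin by (rule rev_finite_subset) auto
    ultimately show ?thesis unfolding rk_def using psubset_card_mono[OF fb] by simp
  qed
  show "y1 = y2"
  proof (rule ccontr)
    assume "y1 \<noteq> y2"
    then have "y1 < y2 \<or> y2 < y1" by arith
    then show False using less h by force
  qed
qed

lemma tree_sg: "bd_tree \<Delta> V E \<Longrightarrow> simple_graph V E"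
  unfolding bd_tree_def is_tree_def by blast

lemma tree_acyc: "bd_tree \<Delta> V E \<Longrightarrow> acyc E"
  unfolding bd_tree_def is_tree_def simple_graph_def acyc_def by blast

lemma rk_bound: assumes "bd_tree \<Delta> V E" "E x y" shows "rk E (x, y) < \<Delta>"
proof -
  have sg: "simple_graph V E" using tree_sg[OF assms(1)] .
  have "x \<in> V" using sg assms(2) unfolding simple_graph_def by blast
  then have "card {z. E x z} \<le> \<Delta>" using assms(1) unfolding bd_tree_def max_degree_le_def by blast
  then show ?thesis using rk_lt[of E x y, OF sg_fin[OF sg] assms(2)] by simp
qed

definition LS :: "nat \<Rightarrow> 'i set \<Rightarrow> 'o set \<Rightarrow> (nat \<Rightarrow> ('i \<times> 'o \<times> nat) option) set" where
  "LS \<Delta> Sin Sout = {g. \<forall>q. (\<Delta> \<le> q \<longrightarrow> g q = None) \<and> (\<forall>t. g q = Some t \<longrightarrow> t \<in> Sin \<times> Sout \<times> {..<\<Delta>})}"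

definition PVS :: "nat \<Rightarrow> nat \<Rightarrow> 'i set \<Rightarrow> 'o set \<Rightarrow> (nat list \<Rightarrow> (nat \<Rightarrow> ('i \<times> 'o \<times> nat) option) option) set" where
  "PVS \<Delta> r Sin Sout = {F. \<forall>w. (\<not> (set w \<subseteq> {..<\<Delta>} \<and> length w \<le> r) \<longrightarrow> F w = None)
      \<and> (\<forall>g. F w = Some g \<longrightarrow> g \<in> LS \<Delta> Sin Sout)}"

lemma finite_LS: assumes "finite Sin" "finite Sout" shows "finite (LS \<Delta> Sin Sout)"
proof -
  let ?B = "insert None (Some ` (Sin \<times> Sout \<times> {..<\<Delta>}))"
  have "finite ?B" using assms by simp
  then have "finite {f. \<forall>x. (x \<in> {..<\<Delta>} \<longrightarrow> f x \<in> ?B) \<and> (x \<notin> {..<\<Delta>} \<longrightarrow> f x = None)}"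
    using finite_set_of_finite_funs[of "{..<\<Delta>}" ?B None] by simp
  moreover have "LS \<Delta> Sin Sout \<subseteq> {f. \<forall>x. (x \<in> {..<\<Delta>} \<longrightarrow> f x \<in> ?B) \<and> (x \<notin> {..<\<Delta>} \<longrightarrow> f x = None)}"
  proof (intro subsetI CollectI allI conjI impI)
    fix g x assume g: "g \<in> LS \<Delta> Sin Sout"
    show "x \<in> {..<\<Delta>} \<Longrightarrow> g x \<in> ?B" by (cases "g x") (use g in \<open>auto simp: LS_def\<close>)
    show "x \<notin> {..<\<Delta>} \<Longrightarrow> g x = None" using g by (auto simp: LS_def)
  qed
  ultimately show ?thesis by (rule rev_finite_subset)
qed

lemma finite_PVS: assumes "finite Sin" "finite Sout" shows "finite (PVS \<Delta> r Sin Sout)"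
proof -
  let ?A = "{w. set w \<subseteq> {..<\<Delta>} \<and> length w \<le> r}"
  let ?B = "insert None (Some ` LS \<Delta> Sin Sout)"
  have "finite ?A" using finite_lists_length_le by blast
  moreover have "finite ?B" using finite_LS[OF assms] by simp
  ultimately have "finite {f. \<forall>x. (x \<in> ?A \<longrightarrow> f x \<in> ?B) \<and> (x \<notin> ?A \<longrightarrow> f x = None)}"
    using finite_set_of_finite_funs[of ?A ?B None] by simp
  moreover have "PVS \<Delta> r Sin Sout \<subseteq> {f. \<forall>x. (x \<in> ?A \<longrightarrow> f x \<in> ?B) \<and> (x \<notin> ?A \<longrightarrow> f x = None)}"
  proof (intro subsetI CollectI allI conjI impI)
    fix g x assume g: "g \<in> PVS \<Delta> r Sin Sout"
    show "x \<in> ?A \<Longrightarrow> g x \<in> ?B" by (cases "g x") (use g in \<open>auto simp: PVS_def\<close>)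
    show "x \<notin> ?A \<Longrightarrow> g x = None" using g by (auto simp: PVS_def)
  qed
  ultimately show ?thesis by (rule rev_finite_subset)
qed

lemma walk_ports: assumes "bd_tree \<Delta> V E"
  shows "walk E (rk E) x w = Some z \<Longrightarrow> set w \<subseteq> {..<\<Delta>}"
proof (induction w arbitrary: x)
  case (Cons q w)
  then obtain y where y: "nbr E (rk E) x q = Some y" and wy: "walk E (rk E) y w = Some z"
    by (auto split: option.splits)
  have "q < \<Delta>" using nbr_SomeD[OF y] rk_bound[OF assms] by blast
  then show ?case using Cons.IH[OF wy] by simp
qed simp

lemma pv_in_PVS:
  assumes t: "bd_tree \<Delta> V E" and ii: "\<forall>x y. E x y \<longrightarrow> i (x, y) \<in> Sin"
    and oo: "\<forall>x y. E x y \<longrightarrow> out (x, y) \<in> Sout"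
  shows "pv E i out (rk E) r x \<in> PVS \<Delta> r Sin Sout"
proof -
  have sg: "simple_graph V E" using tree_sg[OF t] .
  have locLS: "loc E i out (rk E) z \<in> LS \<Delta> Sin Sout" for z
    unfolding LS_def
  proof (intro CollectI allI conjI impI)
    fix q assume "\<Delta> \<le> q"
    show "loc E i out (rk E) z q = None"
    proof (cases "nbr E (rk E) z q")
      case (Some y)
      then show ?thesis using nbr_SomeD[OF Some] rk_bound[OF t] \<open>\<Delta> \<le> q\<close> by fastforce
    qed (simp add: loc_None)
  next
    fix q t' assume h: "loc E i out (rk E) z q = Some t'"
    then obtain y where y: "nbr E (rk E) z q = Some y" using loc_None by (metis not_Some_eq)
    have e: "E z y" using nbr_SomeD[OF y] by simp
    then have "E y z" using sg unfolding simple_graph_def by blast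
    then show "t' \<in> Sin \<times> Sout \<times> {..<\<Delta>}" using h loc_Some[OF y, of i out] ii oo e rk_bound[OF t] by auto
  qed
  show ?thesis unfolding PVS_def
  proof (intro CollectI allI conjI impI)
    fix w assume "\<not> (set w \<subseteq> {..<\<Delta>} \<and> length w \<le> r)"
    then show "pv E i out (rk E) r x w = None" unfolding pv_def using walk_ports[OF t]
      by (cases "walk E (rk E) x w") auto
  next
    fix w g assume "pv E i out (rk E) r x w = Some g"
    then show "g \<in> LS \<Delta> Sin Sout" unfolding pv_def using locLS by (auto split: if_splits)
  qed
qed



definition lab' :: "nat \<Rightarrow> (nat \<Rightarrow> nat \<Rightarrow> bool) \<Rightarrow> (nat \<times> nat \<Rightarrow> 'i) \<Rightarrow> (nat \<times> nat \<Rightarrow> 'o) \<Rightarrow> nat \<times> nat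
    \<Rightarrow> nat \<times> 'o \<times> (nat list \<Rightarrow> (nat \<Rightarrow> ('i \<times> 'o \<times> nat) option) option)" where
  "lab' r E i out h = (rk E h, out h, pv E i out (rk E) r (fst h))"

lemma ball_step: "simple_graph V E \<Longrightarrow> x \<in> ball V E j v \<Longrightarrow> E x z \<Longrightarrow> z \<in> ball V E (Suc j) v"
proof -
  assume sg: "simple_graph V E" and x: "x \<in> ball V E j v" and e: "E x z"
  obtain k where k: "k \<le> j" "(adj V E ^^ k) v x" using x unfolding ball_def by blast
  have "adj V E x z" using sg e unfolding simple_graph_def adj_def by blast
  then have "(adj V E ^^ Suc k) v z" using k(2) relpowp_Suc_I by fastforce
  then show ?thesis using k(1) unfolding ball_def by (intro CollectI exI[of _ "Suc k"]) simp
qed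

lemma ball_mono: "j \<le> j' \<Longrightarrow> ball V E j v \<subseteq> ball V E j' v"
  unfolding ball_def by (blast intro: le_trans)

lemma ball0: "v \<in> ball V E j v"
  unfolding ball_def by (intro CollectI exI[of _ 0]) simp

lemma relpow_eq:
  assumes sg: "simple_graph V E" and sg': "simple_graph V' E'" and sv: "same_view T V E l V' E' l' v"
  shows "k \<le> T \<Longrightarrow> (adj V E ^^ k) v x = (adj V' E' ^^ k) v x"
proof (induction k arbitrary: x)
  case 0
  then show ?case by simp
next
  case (Suc k)
  have bT: "ball V E T v = ball V' E' T v" and ed: "\<forall>x\<in>ball V E T v. \<forall>y\<in>ball V E T v. (E x y \<longleftrightarrow> E' x y)"
    using sv unfolding same_view_def by auto
  show ?case
  proof
    assume "(adj V E ^^ Suc k) v x"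
    then obtain y where y: "(adj V E ^^ k) v y" "adj V E y x" by (auto elim: relpowp_Suc_E)
    have "y \<in> ball V E T v" using y(1) Suc.prems unfolding ball_def by (intro CollectI exI[of _ k]) simp
    moreover have "x \<in> ball V E T v" using y Suc.prems relpowp_Suc_I[of k "adj V E" v y x]
      unfolding ball_def by blast
    ultimately have "E' y x" using ed y(2) unfolding adj_def by blast
    then have "adj V' E' y x" using sg' unfolding simple_graph_def adj_def by blast
    then show "(adj V' E' ^^ Suc k) v x" using Suc.IH y(1) Suc.prems relpowp_Suc_I by fastforce
  next
    assume "(adj V' E' ^^ Suc k) v x"
    then obtain y where y: "(adj V' E' ^^ k) v y" "adj V' E' y x" by (auto elim: relpowp_Suc_E)
    have "y \<in> ball V' E' T v" using y(1) Suc.prems unfolding ball_def by (intro CollectI exI[of _ k]) simp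
    moreover have "x \<in> ball V' E' T v" using y Suc.prems relpowp_Suc_I[of k "adj V' E'" v y x]
      unfolding ball_def by blast
    ultimately have "E y x" using ed y(2) bT unfolding adj_def by blast
    then have "adj V E y x" using sg unfolding simple_graph_def adj_def by blast
    then show "(adj V E ^^ Suc k) v x" using Suc.IH y(1) Suc.prems relpowp_Suc_I by fastforce
  qed
qed

lemma ball_eq:
  assumes sg: "simple_graph V E" and sg': "simple_graph V' E'" and sv: "same_view T V E l V' E' l' v"
    and j: "j \<le> T"
  shows "ball V E j v = ball V' E' j v"
  unfolding ball_def using relpow_eq[OF sg sg' sv] j by auto

lemma nbr_cong: "(\<And>y. (E x y \<and> p (x, y) = q) = (E' x y \<and> p' (x, y) = q)) \<Longrightarrow> nbr E p x q = nbr E' p' x q"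
  unfolding nbr_def by simp

lemma LOC_B:
  assumes t: "bd_tree \<Delta> V E" and t': "bd_tree \<Delta> V' E'"
    and sv: "same_view (r + 2) V E l V' E' l' v" and e: "E v u"
  shows "lab' r E (fst \<circ> l) (snd \<circ> l) (v, u) = lab' r E' (fst \<circ> l') (snd \<circ> l') (v, u)"
proof -
  have sg: "simple_graph V E" and sg': "simple_graph V' E'" using tree_sg t t' by auto
  have bT: "ball V E (r + 2) v = ball V' E' (r + 2) v"
    and ed: "\<forall>x\<in>ball V E (r + 2) v. \<forall>y\<in>ball V E (r + 2) v. (E x y \<longleftrightarrow> E' x y) \<and> (E x y \<longrightarrow> l (x, y) = l' (x, y))"
    using sv unfolding same_view_def by auto
  have nbeq: "(E x z \<longleftrightarrow> E' x z) \<and> (E x z \<longrightarrow> l (x, z) = l' (x, z) \<and> l (z, x) = l' (z, x))"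
    if x: "x \<in> ball V E j v" and j: "j \<le> r + 1" for x z j
  proof -
    have xT: "x \<in> ball V E (r + 2) v" using x j ball_mono[of j "r + 2"] by auto
    have 1: "E x z \<Longrightarrow> E' x z \<and> l (x, z) = l' (x, z) \<and> l (z, x) = l' (z, x)"
    proof -
      assume exz: "E x z"
      have "z \<in> ball V E (Suc j) v" using ball_step[OF sg x exz] .
      then have zT: "z \<in> ball V E (r + 2) v" using j ball_mono[of "Suc j" "r + 2"] by auto
      have "E z x" using exz sg unfolding simple_graph_def by blast
      then show ?thesis using ed xT zT exz by blast
    qed
    have 2: "E' x z \<Longrightarrow> E x z"
    proof -
      assume exz: "E' x z"
      have "x \<in> ball V' E' j v" using x ball_eq[OF sg sg' sv, of j] j by simp
      then have "z \<in> ball V' E' (Suc j) v" using ball_step[OF sg' _ exz] by blast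
      then have "z \<in> ball V E (Suc j) v" using ball_eq[OF sg sg' sv, of "Suc j"] j by simp
      then have zT: "z \<in> ball V E (r + 2) v" using j ball_mono[of "Suc j" "r + 2"] by auto
      then show ?thesis using ed xT exz by blast
    qed
    show ?thesis using 1 2 by blast
  qed
  have rkeq: "rk E (x, y) = rk E' (x, y)" if "x \<in> ball V E j v" "j \<le> r + 1" for x y j
    unfolding rk_def using nbeq[OF that] by simp
  have nbreq: "nbr E (rk E) x q = nbr E' (rk E') x q" if "x \<in> ball V E j v" "j \<le> r + 1" for x q j
    by (rule nbr_cong) (use nbeq[OF that] rkeq[OF that] in auto)
  have wl: "x \<in> ball V E j v \<Longrightarrow> j + length w \<le> r \<Longrightarrow>
     map_option (loc E (fst \<circ> l) (snd \<circ> l) (rk E)) (walk E (rk E) x w)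
     = map_option (loc E' (fst \<circ> l') (snd \<circ> l') (rk E')) (walk E' (rk E') x w)" for x j w
  proof (induction w arbitrary: x j)
    case Nil
    have "loc E (fst \<circ> l) (snd \<circ> l) (rk E) x = loc E' (fst \<circ> l') (snd \<circ> l') (rk E') x"
    proof
      fix q
      show "loc E (fst \<circ> l) (snd \<circ> l) (rk E) x q = loc E' (fst \<circ> l') (snd \<circ> l') (rk E') x q"
      proof (cases "nbr E (rk E) x q")
        case None
        then show ?thesis using nbreq[OF Nil.prems(1)] Nil.prems(2) by (simp add: loc_def)
      next
        case (Some y)
        have exy: "E x y" using nbr_SomeD[OF Some] by simp
        have yb: "y \<in> ball V E (Suc j) v" using ball_step[OF sg Nil.prems(1) exy] .
        have "rk E (y, x) = rk E' (y, x)" using rkeq[OF yb] Nil.prems(2) by simp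
        moreover have "l (x, y) = l' (x, y)" using nbeq[OF Nil.prems(1)] exy Nil.prems(2) by simp
        moreover have "nbr E' (rk E') x q = Some y" using nbreq[OF Nil.prems(1)] Nil.prems(2) Some by simp
        ultimately show ?thesis using Some by (simp add: loc_def)
      qed
    qed
    then show ?case by (simp add: o_def)
  next
    case (Cons q w)
    have ne: "nbr E (rk E) x q = nbr E' (rk E') x q" using nbreq[OF Cons.prems(1)] Cons.prems(2) by simp
    show ?case
    proof (cases "nbr E (rk E) x q")
      case None
      then show ?thesis using ne by simp
    next
      case (Some y)
      have exy: "E x y" using nbr_SomeD[OF Some] by simp
      have yb: "y \<in> ball V E (Suc j) v" using ball_step[OF sg Cons.prems(1) exy] .
      show ?thesis using Cons.IH[OF yb] Cons.prems(2) Some ne by simp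
    qed
  qed
  have "pv E (fst \<circ> l) (snd \<circ> l) (rk E) r v = pv E' (fst \<circ> l') (snd \<circ> l') (rk E') r v"
  proof
    fix w
    show "pv E (fst \<circ> l) (snd \<circ> l) (rk E) r v w = pv E' (fst \<circ> l') (snd \<circ> l') (rk E') r v w"
      unfolding pv_def using wl[OF ball0[of v V E 0]] by simp
  qed
  moreover have "rk E (v, u) = rk E' (v, u)" using rkeq[OF ball0[of v V E 0]] by simp
  moreover have "l (v, u) = l' (v, u)" using nbeq[OF ball0[of v V E 0]] e by simp
  ultimately show ?thesis unfolding lab'_def by simp
qed



definition goodG :: "nat \<Rightarrow> 'i set \<Rightarrow> 'o set \<Rightarrow> nat set \<Rightarrow> (nat \<Rightarrow> nat \<Rightarrow> bool) \<Rightarrow> (nat \<times> nat \<Rightarrow> 'i) \<Rightarrow> (nat \<times> nat \<Rightarrow> 'o) \<Rightarrow> bool" where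
  "goodG \<Delta> Sin Sout V E i out \<longleftrightarrow> bd_tree \<Delta> V E \<and> inputs_in Sin E i \<and> (\<forall>x y. E x y \<longrightarrow> out (x, y) \<in> Sout)"

definition CWd :: "nat \<Rightarrow> 'i set \<Rightarrow> 'o set \<Rightarrow> ('i, 'o) cgraph set \<Rightarrow> nat
    \<Rightarrow> (nat \<times> 'o \<times> (nat list \<Rightarrow> (nat \<Rightarrow> ('i \<times> 'o \<times> nat) option) option) \<Rightarrow> nat) \<Rightarrow> ('i \<times> nat) multiset set" where
  "CWd \<Delta> Sin Sout C r enc = {image_mset (\<lambda>u. (i' (v', u), enc (lab' r E' i' out' (v', u)))) (mset_set {u. E' v' u})
     | V' E' i' out' v'. goodG \<Delta> Sin Sout V' E' i' out' \<and> v' \<in> V' \<and> (\<exists>H\<in>C. ball_iso V' E' i' out' r v' H)}"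

definition CBd :: "nat \<Rightarrow> 'i set \<Rightarrow> 'o set \<Rightarrow> nat
    \<Rightarrow> (nat \<times> 'o \<times> (nat list \<Rightarrow> (nat \<Rightarrow> ('i \<times> 'o \<times> nat) option) option) \<Rightarrow> nat) \<Rightarrow> ('i \<times> nat) multiset set" where
  "CBd \<Delta> Sin Sout r enc = {{#(i' (a, b), enc (lab' r E' i' out' (a, b))), (i' (b, a), enc (lab' r E' i' out' (b, a)))#}
     | V' E' i' out' a b. goodG \<Delta> Sin Sout V' E' i' out' \<and> E' a b}"

lemma pv_mono: "length w \<le> k \<Longrightarrow> length w \<le> k' \<Longrightarrow> pv E i out p k x w = pv E i out p k' x w"
  unfolding pv_def by simp

lemma PARTA:
  fixes enc :: "nat \<times> 'o \<times> (nat list \<Rightarrow> (nat \<Rightarrow> ('i \<times> 'o \<times> nat) option) option) \<Rightarrow> nat"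
    and i :: "nat \<times> nat \<Rightarrow> 'i"
  assumes inj: "inj_on enc S"
    and hS: "\<And>V' E' (i' :: nat \<times> nat \<Rightarrow> 'i) (out' :: nat \<times> nat \<Rightarrow> 'o) a b.
       goodG \<Delta> Sin Sout V' E' i' out' \<Longrightarrow> E' a b \<Longrightarrow> lab' r E' i' out' (a, b) \<in> S"
    and t: "bd_tree \<Delta> V E"
    and sol: "solves_necp Sout' (CWd \<Delta> Sin Sout C r enc) (CBd \<Delta> Sin Sout r enc) V E i o'"
  shows "solves_lcl Sin Sout C r V E i (\<lambda>h. fst (snd (inv_into S enc (o' h))))"
proof -
  define dec where "dec = inv_into S enc"
  have decenc: "dec (enc x) = x" if "x \<in> S" for x unfolding dec_def using inv_into_f_f[OF inj that] .
  define outG where "outG = (\<lambda>h. fst (snd (dec (o' h))))"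
  define portG where "portG = (\<lambda>h. fst (dec (o' h)))"
  define PV where "PV = (\<lambda>h. snd (snd (dec (o' h))))"
  have sg: "simple_graph V E" using tree_sg[OF t] .
  have ac: "acyc E" using tree_acyc[OF t] .
  have inV: "E v u \<Longrightarrow> v \<in> V" for v u using sg unfolding simple_graph_def by blast
  have symE: "E v u \<Longrightarrow> E u v" for v u using sg unfolding simple_graph_def by blast
  define Pn where "Pn = (\<lambda>v V' E' (i' :: nat \<times> nat \<Rightarrow> 'i) (out' :: nat \<times> nat \<Rightarrow> 'o) v'.
     goodG \<Delta> Sin Sout V' E' i' out' \<and> v' \<in> V' \<and> (\<exists>H\<in>C. ball_iso V' E' i' out' r v' H)
     \<and> (\<forall>u. E v u \<longrightarrow> (\<exists>u'. E' v' u' \<and> i (v, u) = i' (v', u') \<and> dec (o' (v, u)) = lab' r E' i' out' (v', u')))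
     \<and> (\<lambda>u. portG (v, u)) ` {u. E v u} = (\<lambda>u'. rk E' (v', u')) ` {u'. E' v' u'}
     \<and> inj_on (\<lambda>u. portG (v, u)) {u. E v u})"
  have node: "\<exists>V' E' i' out' v'. Pn v V' E' i' out' v'" if v: "v \<in> V" for v
  proof -
    have "image_mset (\<lambda>u. (i (v, u), o' (v, u))) (mset_set {u. E v u}) \<in> CWd \<Delta> Sin Sout C r enc"
      using sol v unfolding solves_necp_def by blast
    then obtain V' E' i' out' v' where good: "goodG \<Delta> Sin Sout V' E' i' out'" and v': "v' \<in> V'"
      and bH: "\<exists>H\<in>C. ball_iso V' E' i' out' r v' H"
      and eqM: "image_mset (\<lambda>u. (i (v, u), o' (v, u))) (mset_set {u. E v u})
         = image_mset (\<lambda>u. (i' (v', u), enc (lab' r E' i' out' (v', u)))) (mset_set {u. E' v' u})"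
      unfolding CWd_def by blast
    have t': "bd_tree \<Delta> V' E'" using good goodG_def by blast
    have sg': "simple_graph V' E'" using tree_sg[OF t'] .
    have fN: "finite {u. E v u}" using sg_fin[OF sg] .
    have fN': "finite {u. E' v' u}" using sg_fin[OF sg'] .
    have seteq: "(\<lambda>u. (i (v, u), o' (v, u))) ` {u. E v u} = (\<lambda>u. (i' (v', u), enc (lab' r E' i' out' (v', u)))) ` {u. E' v' u}"
      using arg_cong[OF eqM, of set_mset] fN fN' by simp
    have dl: "dec (enc (lab' r E' i' out' (v', u))) = lab' r E' i' out' (v', u)" if "E' v' u" for u
      using decenc hS[OF good that] by blast
    have a: "\<forall>u. E v u \<longrightarrow> (\<exists>u'. E' v' u' \<and> i (v, u) = i' (v', u') \<and> dec (o' (v, u)) = lab' r E' i' out' (v', u'))"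
    proof (intro allI impI)
      fix u assume "E v u"
      then have "(i (v, u), o' (v, u)) \<in> (\<lambda>u. (i' (v', u), enc (lab' r E' i' out' (v', u)))) ` {u. E' v' u}"
        using seteq by blast
      then obtain u' where "E' v' u'" "i (v, u) = i' (v', u')" "o' (v, u) = enc (lab' r E' i' out' (v', u'))"
        by auto
      then show "\<exists>u'. E' v' u' \<and> i (v, u) = i' (v', u') \<and> dec (o' (v, u)) = lab' r E' i' out' (v', u')"
        using dl by metis
    qed
    have ports: "(\<lambda>u. portG (v, u)) ` {u. E v u} = (\<lambda>u'. rk E' (v', u')) ` {u'. E' v' u'}"
    proof -
      have "(\<lambda>u. portG (v, u)) ` {u. E v u} = (\<lambda>x. fst (dec (snd x))) ` ((\<lambda>u. (i (v, u), o' (v, u))) ` {u. E v u})"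
        unfolding portG_def by (simp add: image_image)
      also have "\<dots> = (\<lambda>x. fst (dec (snd x))) ` ((\<lambda>u. (i' (v', u), enc (lab' r E' i' out' (v', u)))) ` {u. E' v' u})"
        using seteq by simp
      also have "\<dots> = (\<lambda>u'. rk E' (v', u')) ` {u'. E' v' u'}"
        unfolding image_image using dl by (intro image_cong) (auto simp: lab'_def)
      finally show ?thesis .
    qed
    have cN: "card {u. E v u} = card {u. E' v' u}"
      using arg_cong[OF eqM, of size] by simp
    have "inj_on (\<lambda>u'. rk E' (v', u')) {u'. E' v' u'}" using rk_pinj[OF sg'] unfolding pinj_def by blast
    then have "card ((\<lambda>u'. rk E' (v', u')) ` {u'. E' v' u'}) = card {u'. E' v' u'}" by (rule card_image)
    then have "card ((\<lambda>u. portG (v, u)) ` {u. E v u}) = card {u. E v u}" using ports cN by simp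
    then have inj2: "inj_on (\<lambda>u. portG (v, u)) {u. E v u}" using inj_on_iff_eq_card[OF fN] by blast
    show ?thesis unfolding Pn_def using good v' bH a ports inj2 by blast
  qed
  define SV where "SV = (\<lambda>v. SOME F. \<exists>V' E' i' out' v'. Pn v V' E' i' out' v' \<and> F = pv E' i' out' (rk E') r v')"
  have SVw: "\<exists>V' E' i' out' v'. Pn v V' E' i' out' v' \<and> SV v = pv E' i' out' (rk E') r v'" if "v \<in> V" for v
  proof -
    have "\<exists>F. \<exists>V' E' i' out' v'. Pn v V' E' i' out' v' \<and> F = pv E' i' out' (rk E') r v'"
      using node[OF that] by blast
    from someI_ex[OF this] show ?thesis unfolding SV_def by blast
  qed
  have h1: "PV (v, u) = SV v" and h2: "outG (v, u) \<in> Sout" if e: "E v u" for v u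
  proof -
    obtain V' E' i' out' v' where P: "Pn v V' E' i' out' v'" and S: "SV v = pv E' i' out' (rk E') r v'"
      using SVw[OF inV[OF e]] by blast
    obtain u' where u': "E' v' u'" "dec (o' (v, u)) = lab' r E' i' out' (v', u')"
      using P e unfolding Pn_def by blast
    show "PV (v, u) = SV v" using u' S unfolding PV_def lab'_def by simp
    have "out' (v', u') \<in> Sout" using P u'(1) unfolding Pn_def goodG_def by blast
    then show "outG (v, u) \<in> Sout" using u' unfolding outG_def lab'_def by simp
  qed
  have h3: "pinj E portG" unfolding pinj_def
  proof
    fix v
    show "inj_on (\<lambda>u. portG (v, u)) {u. E v u}"
    proof (cases "v \<in> V")
      case True
      then obtain V' E' i' out' v' where "Pn v V' E' i' out' v'" using node by blast
      then show ?thesis unfolding Pn_def by blast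
    next
      case False
      then have "{u. E v u} = {}" using inV by blast
      then show ?thesis by simp
    qed
  qed
  define SV0 where "SV0 = (\<lambda>v. the (SV v []))"
  have SV0: "SV v [] = Some (SV0 v)" if "v \<in> V" for v
    using SVw[OF that] unfolding SV0_def by (auto simp: pv_Nil)
  have SVlong: "length w > r \<Longrightarrow> SV v w = None" if "v \<in> V" for v w
    using SVw[OF that] unfolding pv_def by auto
  have h4: "SV0 v q = None \<and> (\<forall>w. SV v (q # w) = None)" if v: "v \<in> V" and nq: "nbr E portG v q = None" for v q
  proof -
    obtain V' E' i' out' v' where P: "Pn v V' E' i' out' v'" and S: "SV v = pv E' i' out' (rk E') r v'"
      using SVw[OF v] by blast
    have "q \<notin> (\<lambda>u. portG (v, u)) ` {u. E v u}" using nq nbr_None by fastforce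
    then have "q \<notin> (\<lambda>u'. rk E' (v', u')) ` {u'. E' v' u'}" using P unfolding Pn_def by simp
    then have n': "nbr E' (rk E') v' q = None" using nbr_None by fastforce
    have "SV0 v q = None" unfolding SV0_def S pv_Nil using n' loc_None[of E' i' out' "rk E'" v' q] by simp
    moreover have "\<forall>w. SV v (q # w) = None" unfolding S using n' by (simp add: pv_Cons)
    ultimately show ?thesis by blast
  qed
  have EDGE: "\<exists>V'' E'' (i'' :: nat \<times> nat \<Rightarrow> 'i) (out'' :: nat \<times> nat \<Rightarrow> 'o) a b. goodG \<Delta> Sin Sout V'' E'' i'' out'' \<and> E'' a b
     \<and> dec (o' (v, u)) = lab' r E'' i'' out'' (a, b) \<and> dec (o' (u, v)) = lab' r E'' i'' out'' (b, a)
     \<and> i (v, u) = i'' (a, b) \<and> i (u, v) = i'' (b, a)" if e: "E v u" for v u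
  proof -
    have "{#(i (v, u), o' (v, u)), (i (u, v), o' (u, v))#} \<in> CBd \<Delta> Sin Sout r enc"
      using sol e unfolding solves_necp_def by blast
    then obtain V'' E'' i'' out'' a b where good: "goodG \<Delta> Sin Sout V'' E'' i'' out''" and ab: "E'' a b"
      and eqM: "{#(i (v, u), o' (v, u)), (i (u, v), o' (u, v))#}
        = {#(i'' (a, b), enc (lab' r E'' i'' out'' (a, b))), (i'' (b, a), enc (lab' r E'' i'' out'' (b, a)))#}"
      unfolding CBd_def by blast
    have sg'': "simple_graph V'' E''" using good tree_sg unfolding goodG_def by blast
    have ba: "E'' b a" using ab sg'' unfolding simple_graph_def by blast
    have d1: "dec (enc (lab' r E'' i'' out'' (a, b))) = lab' r E'' i'' out'' (a, b)" using decenc hS[OF good ab] by blast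
    have d2: "dec (enc (lab' r E'' i'' out'' (b, a))) = lab' r E'' i'' out'' (b, a)" using decenc hS[OF good ba] by blast
    from two_eq[OF eqM] show ?thesis
    proof
      assume h: "(i (v, u), o' (v, u)) = (i'' (a, b), enc (lab' r E'' i'' out'' (a, b))) \<and>
        (i (u, v), o' (u, v)) = (i'' (b, a), enc (lab' r E'' i'' out'' (b, a)))"
      show ?thesis using h d1 d2 good ab by (intro exI[of _ V''] exI[of _ E''] exI[of _ i''] exI[of _ out''] exI[of _ a] exI[of _ b]) auto
    next
      assume h: "(i (v, u), o' (v, u)) = (i'' (b, a), enc (lab' r E'' i'' out'' (b, a))) \<and>
        (i (u, v), o' (u, v)) = (i'' (a, b), enc (lab' r E'' i'' out'' (a, b)))"
      show ?thesis using h d1 d2 good ba by (intro exI[of _ V''] exI[of _ E''] exI[of _ i''] exI[of _ out''] exI[of _ b] exI[of _ a]) auto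
    qed
  qed
  have E12: "SV0 v (portG (v, u)) = Some (i (v, u), outG (v, u), portG (u, v))
     \<and> (\<forall>w. length w < r \<longrightarrow> SV v (portG (v, u) # w) = SV u w)" if e: "E v u" for v u
  proof -
    obtain V'' E'' i'' out'' a b where good: "goodG \<Delta> Sin Sout V'' E'' i'' out''" and ab: "E'' a b"
      and d1: "dec (o' (v, u)) = lab' r E'' i'' out'' (a, b)" and d2: "dec (o' (u, v)) = lab' r E'' i'' out'' (b, a)"
      and i1: "i (v, u) = i'' (a, b)"
      using EDGE[OF e] by blast
    have sg'': "simple_graph V'' E''" using good tree_sg unfolding goodG_def by blast
    have nab: "nbr E'' (rk E'') a (rk E'' (a, b)) = Some b" using nbr_Some[OF rk_pinj[OF sg'']] ab by blast
    have Sv: "SV v = pv E'' i'' out'' (rk E'') r a" using h1[OF e] d1 unfolding PV_def lab'_def by simp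
    have Su: "SV u = pv E'' i'' out'' (rk E'') r b" using h1[OF symE[OF e]] d2 unfolding PV_def lab'_def by simp
    have pvu: "portG (v, u) = rk E'' (a, b)" "portG (u, v) = rk E'' (b, a)" "outG (v, u) = out'' (a, b)"
      using d1 d2 unfolding portG_def outG_def lab'_def by simp_all
    have "SV0 v (portG (v, u)) = Some (i (v, u), outG (v, u), portG (u, v))"
      unfolding SV0_def Sv pv_Nil using loc_Some[OF nab, of i'' out''] pvu i1 by simp
    moreover have "\<forall>w. length w < r \<longrightarrow> SV v (portG (v, u) # w) = SV u w"
    proof (intro allI impI)
      fix w :: "nat list" assume "length w < r"
      then show "SV v (portG (v, u) # w) = SV u w"
        unfolding Sv Su pvu(1) using nab pv_mono[of w "r - 1" r E'' i'' out'' "rk E''" b] by (simp add: pv_Cons)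
    qed
    ultimately show ?thesis by blast
  qed
  have CLAIM: "v \<in> V \<Longrightarrow> SV v w = pv E i outG portG r v w" for v w
  proof (induction w arbitrary: v)
    case Nil
    have "SV0 v = loc E i outG portG v"
    proof
      fix q
      show "SV0 v q = loc E i outG portG v q"
      proof (cases "nbr E portG v q")
        case None
        then show ?thesis using h4[OF Nil.prems] loc_None by metis
      next
        case (Some u)
        have "E v u" "portG (v, u) = q" using nbr_SomeD[OF Some] by auto
        then show ?thesis using E12[of v u] loc_Some[OF Some, of i outG] by simp
      qed
    qed
    then show ?case using SV0[OF Nil.prems] by (simp add: pv_Nil)
  next
    case (Cons q w)
    show ?case
    proof (cases "length (q # w) \<le> r")
      case False
      then show ?thesis using SVlong[OF Cons.prems] unfolding pv_def by simp
    next
      case True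
      show ?thesis
      proof (cases "nbr E portG v q")
        case None
        then show ?thesis using h4[OF Cons.prems None] by (simp add: pv_Cons)
      next
        case (Some u)
        have e: "E v u" "portG (v, u) = q" using nbr_SomeD[OF Some] by auto
        have "SV v (q # w) = SV u w" using E12[OF e(1)] e(2) True by auto
        also have "\<dots> = pv E i outG portG r u w" using Cons.IH[of u] sg e(1) unfolding simple_graph_def by blast
        also have "\<dots> = pv E i outG portG (r - 1) u w" using pv_mono[of w r "r - 1" E i outG portG u] True by simp
        finally show ?thesis using Some True by (simp add: pv_Cons)
      qed
    qed
  qed
  have balls: "\<exists>H\<in>C. ball_iso V E i outG r v H" if v: "v \<in> V" for v
  proof -
    obtain V' E' i' out' v' where P: "Pn v V' E' i' out' v'" and S: "SV v = pv E' i' out' (rk E') r v'"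
      using SVw[OF v] by blast
    have good: "goodG \<Delta> Sin Sout V' E' i' out'" and v': "v' \<in> V'" and bH: "\<exists>H\<in>C. ball_iso V' E' i' out' r v' H"
      using P unfolding Pn_def by auto
    have t': "bd_tree \<Delta> V' E'" using good goodG_def by blast
    have eq: "pv E i outG portG r v = pv E' i' out' (rk E') r v'" using CLAIM[OF v] S by auto
    obtain f where f: "bij_betw f (ball V E r v) (ball V' E' r v')" "f v = v'"
      "\<forall>x\<in>ball V E r v. \<forall>y\<in>ball V E r v. (E x y \<longleftrightarrow> E' (f x) (f y))
        \<and> (E x y \<longrightarrow> i (x, y) = i' (f x, f y) \<and> outG (x, y) = out' (f x, f y))"
      using ISO[OF sg ac h3 v tree_sg[OF t'] tree_acyc[OF t'] rk_pinj[OF tree_sg[OF t']] v' eq] by blast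
    obtain H where H: "H \<in> C" "ball_iso V' E' i' out' r v' H" using bH by blast
    then obtain g where g: "bij_betw g (ball V' E' r v') (cV H)" "g v' = ctr H"
      "\<forall>x\<in>ball V' E' r v'. \<forall>y\<in>ball V' E' r v'. (E' x y \<longleftrightarrow> cE H (g x) (g y))
        \<and> (E' x y \<longrightarrow> i' (x, y) = cin H (g x, g y) \<and> out' (x, y) = cout H (g x, g y))"
      unfolding ball_iso_def by blast
    have fb: "f x \<in> ball V' E' r v'" if "x \<in> ball V E r v" for x using f(1) that bij_betwE by blast
    have "ball_iso V E i outG r v H" unfolding ball_iso_def
    proof (rule exI[of _ "g \<circ> f"], intro conjI)
      show "bij_betw (g \<circ> f) (ball V E r v) (cV H)" using bij_betw_trans[OF f(1) g(1)] .
      show "(g \<circ> f) v = ctr H" using f(2) g(2) by simp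
      show "\<forall>x\<in>ball V E r v. \<forall>y\<in>ball V E r v. (E x y \<longleftrightarrow> cE H ((g \<circ> f) x) ((g \<circ> f) y)) \<and>
        (E x y \<longrightarrow> i (x, y) = cin H ((g \<circ> f) x, (g \<circ> f) y) \<and> outG (x, y) = cout H ((g \<circ> f) x, (g \<circ> f) y))"
      proof (intro ballI)
        fix x y assume x: "x \<in> ball V E r v" and y: "y \<in> ball V E r v"
        show "(E x y \<longleftrightarrow> cE H ((g \<circ> f) x) ((g \<circ> f) y)) \<and>
          (E x y \<longrightarrow> i (x, y) = cin H ((g \<circ> f) x, (g \<circ> f) y) \<and> outG (x, y) = cout H ((g \<circ> f) x, (g \<circ> f) y))"
          using f(3) g(3) x y fb[OF x] fb[OF y] by auto
      qed
    qed
    then show ?thesis using H(1) by blast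
  qed
  show ?thesis unfolding solves_lcl_def
    using h2 balls unfolding outG_def dec_def by blast
qed



theorem claim4p3:
  "\<exists>c::nat. \<forall>(Sin :: 'i set) (Sout :: 'o set) C r \<Delta>. is_lcl Sin Sout C r \<longrightarrow>
     (\<exists>(Sout' :: nat set) CW CB. is_necp Sin Sout' CW CB
        \<and> (\<exists>T A. T \<le> c * (r + 1) \<and> local_alg \<Delta> T A
             \<and> (\<forall>V E i o'. bd_tree \<Delta> V E \<and> inputs_in Sin E i \<and> solves_necp Sout' CW CB V E i o'
                  \<longrightarrow> solves_lcl Sin Sout C r V E i (A V E (\<lambda>h. (i h, o' h)))))
        \<and> (\<exists>T B. T \<le> c * (r + 1) \<and> local_alg \<Delta> T B
             \<and> (\<forall>V E i out. bd_tree \<Delta> V E \<and> inputs_in Sin E i \<and> solves_lcl Sin Sout C r V E i out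
                  \<longrightarrow> solves_necp Sout' CW CB V E i (B V E (\<lambda>h. (i h, out h))))))"
proof (intro exI[of _ 3] allI impI)
  fix Sin :: "'i set" and Sout :: "'o set" and C r \<Delta>
  assume lcl: "is_lcl Sin Sout C r"
  have fin: "finite Sin" "finite Sout" using lcl unfolding is_lcl_def by auto
  define S where "S = {..<\<Delta>} \<times> Sout \<times> PVS \<Delta> r Sin Sout"
  have fS: "finite S" unfolding S_def using finite_PVS[OF fin] fin by simp
  obtain enc :: "nat \<times> 'o \<times> (nat list \<Rightarrow> (nat \<Rightarrow> ('i \<times> 'o \<times> nat) option) option) \<Rightarrow> nat"
    where inj: "inj_on enc S" using finite_imp_inj_to_nat_seg[OF fS] by blast
  have hS: "lab' r E' i' out' (a, b) \<in> S" if good: "goodG \<Delta> Sin Sout V' E' i' out'" and ab: "E' a b"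
    for V' E' and i' :: "nat \<times> nat \<Rightarrow> 'i" and out' :: "nat \<times> nat \<Rightarrow> 'o" and a b
  proof -
    have t: "bd_tree \<Delta> V' E'" and ii: "\<forall>x y. E' x y \<longrightarrow> i' (x, y) \<in> Sin"
      and oo: "\<forall>x y. E' x y \<longrightarrow> out' (x, y) \<in> Sout"
      using good unfolding goodG_def inputs_in_def by auto
    show ?thesis unfolding S_def lab'_def
      using rk_bound[OF t ab] oo ab pv_in_PVS[OF t ii oo] by simp
  qed
  define Sout' where "Sout' = enc ` S"
  define CW where "CW = CWd \<Delta> Sin Sout C r enc"
  define CB where "CB = CBd \<Delta> Sin Sout r enc"
  have encS: "enc (lab' r E' i' out' (a, b)) \<in> Sout'" if "goodG \<Delta> Sin Sout V' E' i' out'" "E' a b"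
    for V' E' and i' :: "nat \<times> nat \<Rightarrow> 'i" and out' :: "nat \<times> nat \<Rightarrow> 'o" and a b
    unfolding Sout'_def using hS[OF that] by blast
  have necp: "is_necp Sin Sout' CW CB"
  proof -
    let ?X = "Sin \<times> Sout'"
    have fX: "finite ?X" using fin fS unfolding Sout'_def by simp
    have CWs: "CW \<subseteq> {M. set_mset M \<subseteq> ?X \<and> size M \<le> \<Delta>}"
    proof
      fix M assume "M \<in> CW"
      then obtain V' E' i' out' v' where good: "goodG \<Delta> Sin Sout V' E' i' out'" and v': "v' \<in> V'"
        and M: "M = image_mset (\<lambda>u. (i' (v', u), enc (lab' r E' i' out' (v', u)))) (mset_set {u. E' v' u})"
        unfolding CW_def CWd_def by blast
      have t: "bd_tree \<Delta> V' E'" using good goodG_def by blast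
      have fN: "finite {u. E' v' u}" using sg_fin[OF tree_sg[OF t]] .
      have "card {u. E' v' u} \<le> \<Delta>" using t v' unfolding bd_tree_def max_degree_le_def by blast
      moreover have "set_mset M \<subseteq> ?X" unfolding M using fN encS[OF good] good
        unfolding goodG_def inputs_in_def by auto
      ultimately show "M \<in> {M. set_mset M \<subseteq> ?X \<and> size M \<le> \<Delta>}" unfolding M by simp
    qed
    have CBs: "CB \<subseteq> {M. set_mset M \<subseteq> ?X \<and> size M \<le> 2}"
    proof
      fix M assume "M \<in> CB"
      then obtain V' E' i' out' a b where good: "goodG \<Delta> Sin Sout V' E' i' out'" and ab: "E' a b"
        and M: "M = {#(i' (a, b), enc (lab' r E' i' out' (a, b))), (i' (b, a), enc (lab' r E' i' out' (b, a)))#}"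
        unfolding CB_def CBd_def by blast
      have t: "bd_tree \<Delta> V' E'" using good goodG_def by blast
      have ba: "E' b a" using ab tree_sg[OF t] unfolding simple_graph_def by blast
      show "M \<in> {M. set_mset M \<subseteq> ?X \<and> size M \<le> 2}" unfolding M
        using encS[OF good ab] encS[OF good ba] good ab ba unfolding goodG_def inputs_in_def by auto
    qed
    show ?thesis unfolding is_necp_def
      using fin fX CWs CBs fin_ms[OF fX] rev_finite_subset fS unfolding Sout'_def by blast
  qed
  define A where "A = (\<lambda>(V :: nat set) (E :: nat \<Rightarrow> nat \<Rightarrow> bool) (l :: nat \<times> nat \<Rightarrow> 'i \<times> nat) h.
     fst (snd (inv_into S enc (snd (l h)))))"
  have partA: "\<exists>T A. T \<le> 3 * (r + 1) \<and> local_alg \<Delta> T A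
       \<and> (\<forall>V E i o'. bd_tree \<Delta> V E \<and> inputs_in Sin E i \<and> solves_necp Sout' CW CB V E i o'
            \<longrightarrow> solves_lcl Sin Sout C r V E i (A V E (\<lambda>h. (i h, o' h))))"
  proof (intro exI[of _ 1] exI[of _ A] conjI allI impI)
    show "1 \<le> 3 * (r + 1)" by simp
    show "local_alg \<Delta> 1 A" unfolding local_alg_def
    proof (intro allI impI)
      fix V E V' E' v u and l l' :: "nat \<times> nat \<Rightarrow> 'i \<times> nat"
      assume h: "bd_tree \<Delta> V E \<and> bd_tree \<Delta> V' E' \<and> v \<in> V \<and> v \<in> V' \<and> same_view 1 V E l V' E' l' v"
        and e: "E v u"
      have sg: "simple_graph V E" using h tree_sg by blast
      have v0: "v \<in> ball V E 0 v" by (rule ball0)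
      have "u \<in> ball V E 1 v" using ball_step[OF sg v0 e] by simp
      moreover have "v \<in> ball V E 1 v" using ball0 .
      ultimately have "l (v, u) = l' (v, u)" using h e unfolding same_view_def by blast
      then show "A V E l (v, u) = A V' E' l' (v, u)" unfolding A_def by simp
    qed
  next
    fix V E i o'
    assume h: "bd_tree \<Delta> V E \<and> inputs_in Sin E i \<and> solves_necp Sout' CW CB V E i o'"
    have "solves_lcl Sin Sout C r V E i (\<lambda>h. fst (snd (inv_into S enc (o' h))))"
    proof (rule PARTA[OF inj])
      show "bd_tree \<Delta> V E" using h by blast
      show "solves_necp Sout' (CWd \<Delta> Sin Sout C r enc) (CBd \<Delta> Sin Sout r enc) V E i o'"
        using h unfolding CW_def CB_def by blast
    qed (rule hS)
    then show "solves_lcl Sin Sout C r V E i (A V E (\<lambda>h. (i h, o' h)))" unfolding A_def by simp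
  qed
  define B where "B = (\<lambda>(V :: nat set) (E :: nat \<Rightarrow> nat \<Rightarrow> bool) (l :: nat \<times> nat \<Rightarrow> 'i \<times> 'o) h.
     enc (lab' r E (fst \<circ> l) (snd \<circ> l) h))"
  have partB: "\<exists>T B. T \<le> 3 * (r + 1) \<and> local_alg \<Delta> T B
       \<and> (\<forall>V E i out. bd_tree \<Delta> V E \<and> inputs_in Sin E i \<and> solves_lcl Sin Sout C r V E i out
            \<longrightarrow> solves_necp Sout' CW CB V E i (B V E (\<lambda>h. (i h, out h))))"
  proof (intro exI[of _ "r + 2"] exI[of _ B] conjI allI impI)
    show "r + 2 \<le> 3 * (r + 1)" by simp
    show "local_alg \<Delta> (r + 2) B" unfolding local_alg_def B_def
    proof (intro allI impI)
      fix V E V' E' v u and l l' :: "nat \<times> nat \<Rightarrow> 'i \<times> 'o"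
      assume h: "bd_tree \<Delta> V E \<and> bd_tree \<Delta> V' E' \<and> v \<in> V \<and> v \<in> V' \<and> same_view (r + 2) V E l V' E' l' v"
        and e: "E v u"
      show "enc (lab' r E (fst \<circ> l) (snd \<circ> l) (v, u)) = enc (lab' r E' (fst \<circ> l') (snd \<circ> l') (v, u))"
        using LOC_B[of \<Delta> V E V' E' r l l' v u] h e by simp
    qed
  next
    fix V E i out
    assume h: "bd_tree \<Delta> V E \<and> inputs_in Sin E i \<and> solves_lcl Sin Sout C r V E i out"
    have Beq: "B V E (\<lambda>h. (i h, out h)) = (\<lambda>h. enc (lab' r E i out h))"
      unfolding B_def by (simp add: o_def)
    have good: "goodG \<Delta> Sin Sout V E i out" using h unfolding goodG_def solves_lcl_def by blast
    show "solves_necp Sout' CW CB V E i (B V E (\<lambda>h. (i h, out h)))"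
      unfolding Beq solves_necp_def
    proof (intro conjI allI impI ballI)
      fix x y assume "E x y"
      then show "enc (lab' r E i out (x, y)) \<in> Sout'" using encS[OF good] by blast
    next
      fix v assume v: "v \<in> V"
      have "\<exists>H\<in>C. ball_iso V E i out r v H" using h v unfolding solves_lcl_def by blast
      then show "image_mset (\<lambda>u. (i (v, u), enc (lab' r E i out (v, u)))) (mset_set {u. E v u}) \<in> CW"
        unfolding CW_def CWd_def using good v by blast
    next
      fix u v assume "E u v"
      then show "{#(i (u, v), enc (lab' r E i out (u, v))), (i (v, u), enc (lab' r E i out (v, u)))#} \<in> CB"
        unfolding CB_def CBd_def using good by blast
    qed
  qed
  show "\<exists>(Sout' :: nat set) CW CB. is_necp Sin Sout' CW CB
        \<and> (\<exists>T A. T \<le> 3 * (r + 1) \<and> local_alg \<Delta> T A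
             \<and> (\<forall>V E i o'. bd_tree \<Delta> V E \<and> inputs_in Sin E i \<and> solves_necp Sout' CW CB V E i o'
                  \<longrightarrow> solves_lcl Sin Sout C r V E i (A V E (\<lambda>h. (i h, o' h)))))
        \<and> (\<exists>T B. T \<le> 3 * (r + 1) \<and> local_alg \<Delta> T B
             \<and> (\<forall>V E i out. bd_tree \<Delta> V E \<and> inputs_in Sin E i \<and> solves_lcl Sin Sout C r V E i out
                  \<longrightarrow> solves_necp Sout' CW CB V E i (B V E (\<lambda>h. (i h, out h)))))"
    using necp partA partB by blast
qed


end
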